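(* Let $T$ be a tree with $n\ge 2$ vertices. Then $$F(T)\geq \prod_{v\in V(T)} d(v)!,$$ where $d(v)$ is the degree of $v$ in $T$. Equality holds if and only if $T$ is a path of length $n-1$ or a star.
   Context: For a finite undirected graph $G=(V,E)$, a shelling of $G$ is a total ordering $\sigma(1),\ldots,\sigma(|E|)$ of $E$ such that for every $k=1,\ldots,|E|$ the edges $\sigma(1),\ldots,\sigma(k)$ form a connected subgraph of $G$; $F(G)$ is the number of shellings of $G$. *)

theory Defs
  imports Main
begin

definition simple_graph :: "'a set \<Rightarrow> 'a set set \<Rightarrow> bool" where
  "simple_graph V E \<longleftrightarrow> finite V \<and> (\<forall>e\<in>E. card e = 2 \<and> e \<subseteq> V)"

definition adj_rel :: "'a set set \<Rightarrow> ('a \<times> 'a) set" where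
  "adj_rel E = {(x, y). {x, y} \<in> E}"

definition connected_graph :: "'a set \<Rightarrow> 'a set set \<Rightarrow> bool" where
  "connected_graph V E \<longleftrightarrow> (\<forall>u\<in>V. \<forall>v\<in>V. (u, v) \<in> (adj_rel E)\<^sup>*)"

definition is_cycle :: "'a set set \<Rightarrow> 'a list \<Rightarrow> bool" where
  "is_cycle E vs \<longleftrightarrow> length vs \<ge> 3 \<and> distinct vs \<and>
     (\<forall>i<length vs. {vs ! i, vs ! ((i + 1) mod length vs)} \<in> E)"

definition is_tree :: "'a set \<Rightarrow> 'a set set \<Rightarrow> bool" where
  "is_tree V E \<longleftrightarrow> simple_graph V E \<and> V \<noteq> {} \<and> connected_graph V E \<and>
     \<not> (\<exists>vs. is_cycle E vs)"

definition degree :: "'a set set \<Rightarrow> 'a \<Rightarrow> nat" where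
  "degree E v = card {e\<in>E. v \<in> e}"

definition edges_connected :: "'a set set \<Rightarrow> bool" where
  "edges_connected S \<longleftrightarrow> connected_graph (\<Union>S) S"

definition is_shelling :: "'a set set \<Rightarrow> 'a set list \<Rightarrow> bool" where
  "is_shelling E \<sigma> \<longleftrightarrow> distinct \<sigma> \<and> set \<sigma> = E \<and>
     (\<forall>k\<in>{1..length \<sigma>}. edges_connected (set (take k \<sigma>)))"

definition num_shellings :: "'a set set \<Rightarrow> nat" ("F") where
  "F E = card {\<sigma>. is_shelling E \<sigma>}"

definition is_path_graph :: "'a set \<Rightarrow> 'a set set \<Rightarrow> bool" where
  "is_path_graph V E \<longleftrightarrow> (\<exists>vs. distinct vs \<and> set vs = V \<and>
     E = {{vs ! i, vs ! (i + 1)} | i. i + 1 < length vs})"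

definition is_star :: "'a set \<Rightarrow> 'a set set \<Rightarrow> bool" where
  "is_star V E \<longleftrightarrow> (\<exists>c\<in>V. E = {{c, v} | v. v \<in> V \<and> v \<noteq> c})"

end

theory Submission
  imports Defs
begin

section \<open>Walks\<close>

fun wk :: "'a set set \<Rightarrow> 'a list \<Rightarrow> bool" where
  "wk E (x # y # zs) = ({x, y} \<in> E \<and> wk E (y # zs))"
| "wk E _ = True"

lemma wk_Cons: "wk E (x # xs) \<longleftrightarrow> (xs = [] \<or> ({x, hd xs} \<in> E \<and> wk E xs))"
  by (cases xs) auto

lemma wk_append:
  "wk E (xs @ ys) \<longleftrightarrow> wk E xs \<and> wk E ys \<and> (xs \<noteq> [] \<and> ys \<noteq> [] \<longrightarrow> {last xs, hd ys} \<in> E)"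
proof (induction xs)
  case Nil
  then show ?case by simp
next
  case (Cons x xs)
  then show ?case by (cases xs) (auto simp: wk_Cons)
qed

lemma wk_nth: "wk E xs \<longleftrightarrow> (\<forall>i. Suc i < length xs \<longrightarrow> {xs ! i, xs ! Suc i} \<in> E)"
proof (induction xs)
  case Nil
  then show ?case by simp
next
  case (Cons x xs)
  show ?case
  proof (cases xs)
    case Nil
    then show ?thesis by simp
  next
    case (Cons y ys)
    have "wk E (x # xs) \<longleftrightarrow> {x, y} \<in> E \<and> wk E xs" using Cons by simp
    also have "\<dots> \<longleftrightarrow> (\<forall>i. Suc i < length (x # xs) \<longrightarrow> {(x # xs) ! i, (x # xs) ! Suc i} \<in> E)"
      unfolding Cons.IH using Cons
      by (auto simp: nth_Cons split: nat.splits)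
    finally show ?thesis .
  qed
qed

lemma wk_rev: "wk E (rev xs) = wk E xs"
proof (induction xs)
  case Nil
  then show ?case by simp
next
  case (Cons x xs)
  then show ?case by (cases xs) (auto simp: wk_append wk_Cons insert_commute)
qed

lemma wk_mono: "wk S xs \<Longrightarrow> S \<subseteq> E \<Longrightarrow> wk E xs"
  by (auto simp: wk_nth)

lemma wk_take: "wk E xs \<Longrightarrow> wk E (take n xs)"
  by (metis append_take_drop_id wk_append)

lemma wk_drop: "wk E xs \<Longrightarrow> wk E (drop n xs)"
  by (metis append_take_drop_id wk_append)

lemma rtrancl_walk:
  assumes "(a, b) \<in> (adj_rel E)\<^sup>*"
  shows "\<exists>xs. xs \<noteq> [] \<and> hd xs = a \<and> last xs = b \<and> distinct xs \<and> wk E xs"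
  using assms
proof (induction rule: rtrancl_induct)
  case base
  then show ?case by (intro exI[of _ "[a]"]) auto
next
  case (step y z)
  then obtain xs where xs: "xs \<noteq> []" "hd xs = a" "last xs = y" "distinct xs" "wk E xs" by blast
  have yz: "{y, z} \<in> E" using step(2) by (simp add: adj_rel_def)
  show ?case
  proof (cases "z \<in> set xs")
    case True
    then obtain ys zs where d: "xs = ys @ z # zs" by (meson split_list)
    have "wk E (ys @ [z])" using xs(5) unfolding d by (simp add: wk_append)
    moreover have "distinct (ys @ [z])" using xs(4) d by simp
    moreover have "hd (ys @ [z]) = a" using xs(2) d by (cases ys) auto
    ultimately show ?thesis by (intro exI[of _ "ys @ [z]"]) auto
  next
    case False
    have "wk E (xs @ [z])" using xs yz by (simp add: wk_append)
    moreover have "distinct (xs @ [z])" using xs(4) False by simp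
    moreover have "hd (xs @ [z]) = a" using xs(1,2) by simp
    ultimately show ?thesis by (intro exI[of _ "xs @ [z]"]) auto
  qed
qed

lemma cycle_intro:
  assumes "distinct ys" "3 \<le> length ys" "wk E ys" "{last ys, hd ys} \<in> E"
  shows "is_cycle E ys"
  unfolding is_cycle_def
proof (intro conjI allI impI)
  fix i assume i: "i < length ys"
  show "{ys ! i, ys ! ((i + 1) mod length ys)} \<in> E"
  proof (cases "Suc i < length ys")
    case True
    then show ?thesis using assms(3) by (simp add: wk_nth)
  next
    case False
    then have "i = length ys - 1" using i by simp
    moreover have "ys \<noteq> []" using assms(2) by auto
    ultimately have "ys ! i = last ys" "(i + 1) mod length ys = 0"
      by (auto simp: last_conv_nth)
    moreover have "ys ! 0 = hd ys" using \<open>ys \<noteq> []\<close> by (simp add: hd_conv_nth)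
    ultimately show ?thesis using assms(4) by simp
  qed
qed (use assms in auto)

lemma sg_edge:
  assumes "simple_graph V E" "e \<in> E"
  shows "\<exists>a b. a \<noteq> b \<and> e = {a, b} \<and> a \<in> V \<and> b \<in> V"
proof -
  have "card e = 2" "e \<subseteq> V" using assms by (auto simp: simple_graph_def)
  then show ?thesis by (auto simp: card_2_iff)
qed

lemma sg_pair:
  assumes "simple_graph V E" "{a, b} \<in> E"
  shows "a \<noteq> b \<and> a \<in> V \<and> b \<in> V"
proof -
  have "card {a, b} = 2" "{a, b} \<subseteq> V" using assms by (auto simp: simple_graph_def)
  then show ?thesis by (cases "a = b") auto
qed

lemma sg_edge_at:
  assumes "simple_graph V E" "e \<in> E" "x \<in> e"
  shows "\<exists>y. y \<noteq> x \<and> e = {x, y} \<and> y \<in> V"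
  using sg_edge[OF assms(1,2)] assms(3) by (auto simp: insert_commute)

lemma sg_finite_E: "simple_graph V E \<Longrightarrow> finite E"
  unfolding simple_graph_def by (meson Pow_iff finite_Pow_iff finite_subset subsetI)

lemma closure_reach:
  assumes "(s, y) \<in> (adj_rel E)\<^sup>*" "s \<in> S" "\<And>p q. {p, q} \<in> E \<Longrightarrow> p \<in> S \<Longrightarrow> q \<in> S"
  shows "y \<in> S"
  using assms(1)
proof (induction rule: rtrancl_induct)
  case base
  then show ?case using assms(2) .
next
  case (step y z)
  then show ?case using assms(3) by (auto simp: adj_rel_def)
qed

lemma conn_edge:
  assumes "connected_graph V E" "s \<in> S" "S \<subseteq> V" "t \<in> V" "t \<notin> S"
  shows "\<exists>p q. {p, q} \<in> E \<and> p \<in> S \<and> q \<notin> S"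
proof (rule ccontr)
  assume "\<not> ?thesis"
  then have "\<And>p q. {p, q} \<in> E \<Longrightarrow> p \<in> S \<Longrightarrow> q \<in> S" by blast
  moreover have "(s, t) \<in> (adj_rel E)\<^sup>*" using assms unfolding connected_graph_def by blast
  ultimately have "t \<in> S" using closure_reach assms(2) by metis
  then show False using assms(5) by simp
qed

lemma tree_sg: "is_tree V E \<Longrightarrow> simple_graph V E" by (simp add: is_tree_def)
lemma tree_conn: "is_tree V E \<Longrightarrow> connected_graph V E" by (simp add: is_tree_def)
lemma tree_nocyc: "is_tree V E \<Longrightarrow> \<not> is_cycle E vs" by (auto simp: is_tree_def)
lemma tree_finite: "is_tree V E \<Longrightarrow> finite V" by (simp add: is_tree_def simple_graph_def)

definition pth :: "'a set \<Rightarrow> 'a set set \<Rightarrow> 'a list \<Rightarrow> bool" where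
  "pth V E xs \<longleftrightarrow> distinct xs \<and> set xs \<subseteq> V \<and> wk E xs"

definition lp :: "'a set \<Rightarrow> 'a set set \<Rightarrow> 'a list \<Rightarrow> bool" where
  "lp V E xs \<longleftrightarrow> pth V E xs \<and> (\<forall>ys. pth V E ys \<longrightarrow> length ys \<le> length xs)"

lemma lp_exists:
  assumes "finite V"
  shows "\<exists>xs. lp V E xs"
proof -
  let ?P = "\<lambda>n. \<exists>xs. pth V E xs \<and> length xs = n"
  have "?P 0" by (intro exI[of _ "[]"]) (simp add: pth_def)
  moreover have "\<forall>n. ?P n \<longrightarrow> n \<le> card V"
    by (auto simp: pth_def) (metis assms card_mono distinct_card)
  ultimately obtain n where "?P n" "\<forall>m. ?P m \<longrightarrow> m \<le> n"
    using Nat.ex_has_greatest_nat[of ?P 0 "card V"] by blast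
  then show ?thesis unfolding lp_def by blast
qed

lemma lp_rev: "lp V E xs \<Longrightarrow> lp V E (rev xs)"
  by (simp add: lp_def pth_def wk_rev)

lemma lp_hd:
  assumes "simple_graph V E" "lp V E xs" "xs \<noteq> []" "{hd xs, z} \<in> E"
  shows "z \<in> set xs"
proof (rule ccontr)
  assume z: "z \<notin> set xs"
  have "z \<in> V" using sg_pair[OF assms(1,4)] by simp
  then have "pth V E (z # xs)"
    using assms(2,3,4) z by (cases xs) (auto simp: lp_def pth_def insert_commute)
  then show False using assms(2) unfolding lp_def by fastforce
qed

lemma lp_last:
  assumes "simple_graph V E" "lp V E xs" "xs \<noteq> []" "{last xs, z} \<in> E"
  shows "z \<in> set xs"
  using lp_hd[OF assms(1) lp_rev[OF assms(2)]] assms(3,4) by (simp add: hd_rev)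

section \<open>Tree structure\<close>

lemma last_sub:
  assumes "i \<le> j" "j < length xs"
  shows "last (drop i (take (Suc j) xs)) = xs ! j"
proof -
  have "last (drop i (take (Suc j) xs)) = last (take (Suc j) xs)"
    using assms by (simp add: last_drop)
  also have "\<dots> = xs ! j" using assms by (simp add: take_Suc_conv_app_nth)
  finally show ?thesis .
qed

lemma chord:
  assumes "is_tree V E" "pth V E xs" "Suc (Suc i) \<le> j" "j < length xs" "{xs ! i, xs ! j} \<in> E"
  shows False
proof -
  let ?ys = "drop i (take (Suc j) xs)"
  have "3 \<le> length ?ys" using assms by simp
  moreover have "distinct ?ys" using assms(2) by (simp add: pth_def)
  moreover have "wk E ?ys" using assms(2) by (simp add: pth_def wk_take wk_drop)
  moreover have "hd ?ys = xs ! i" using assms by (simp add: hd_drop_conv_nth)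
  moreover have "last ?ys = xs ! j" using assms by (intro last_sub) auto
  ultimately have "is_cycle E ?ys" using assms(5) by (intro cycle_intro) (auto simp: insert_commute)
  then show False using tree_nocyc[OF assms(1)] by blast
qed

lemma outside:
  assumes "is_tree V E" "pth V E xs" "y \<notin> set xs" "i < j" "j < length xs"
    "{y, xs ! i} \<in> E" "{y, xs ! j} \<in> E"
  shows False
proof -
  let ?zs = "drop i (take (Suc j) xs)"
  let ?ys = "y # ?zs"
  have ne: "?zs \<noteq> []" using assms by simp
  have "3 \<le> length ?ys" using assms by simp
  moreover have "distinct ?ys" using assms(2,3) by (auto simp: pth_def dest: in_set_dropD in_set_takeD)
  moreover have "hd ?zs = xs ! i" using assms by (simp add: hd_drop_conv_nth)
  moreover have "wk E ?ys" using assms(2,6) ne \<open>hd ?zs = xs ! i\<close>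
    by (simp add: pth_def wk_take wk_drop wk_Cons)
  moreover have "last ?ys = xs ! j" using assms ne last_sub[of i j xs] by simp
  ultimately have "is_cycle E ?ys" using assms(7) by (intro cycle_intro) (auto simp: insert_commute)
  then show False using tree_nocyc[OF assms(1)] by blast
qed

lemma hd_nbr:
  assumes "is_tree V E" "lp V E xs" "2 \<le> length xs" "e \<in> E" "xs ! 0 \<in> e"
  shows "e = {xs ! 0, xs ! 1}"
proof -
  have sg: "simple_graph V E" using assms(1) by (rule tree_sg)
  obtain z where z: "z \<noteq> xs ! 0" "e = {xs ! 0, z}" using sg_edge_at[OF sg assms(4,5)] by blast
  have "xs \<noteq> []" using assms(3) by auto
  then have "hd xs = xs ! 0" by (simp add: hd_conv_nth)
  then have "z \<in> set xs" using lp_hd[OF sg assms(2)] \<open>xs \<noteq> []\<close> z assms(4) by simp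
  then obtain j where j: "j < length xs" "xs ! j = z" by (auto simp: in_set_conv_nth)
  have "j \<noteq> 0" using j(2) z(1) by metis
  moreover have "\<not> 2 \<le> j"
    using chord[OF assms(1), of xs 0 j] assms(2,4) j z by (auto simp: lp_def)
  ultimately have "j = 1" by simp
  then show ?thesis using z j by simp
qed

lemma nbr1:
  assumes "is_tree V E" "lp V E xs" "3 \<le> length xs" "e \<in> E" "xs ! 1 \<in> e"
    "e \<noteq> {xs ! 1, xs ! 2}"
  shows "\<exists>y. y \<noteq> xs ! 1 \<and> e = {xs ! 1, y} \<and> (\<forall>e'\<in>E. y \<in> e' \<longrightarrow> e' = e)"
proof -
  have sg: "simple_graph V E" using assms(1) by (rule tree_sg)
  have p: "pth V E xs" using assms(2) by (simp add: lp_def)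
  obtain y where y: "y \<noteq> xs ! 1" "e = {xs ! 1, y}" using sg_edge_at[OF sg assms(4,5)] by blast
  have yE: "{xs ! 1, y} \<in> E" using assms(4) y(2) by simp
  have ye: "{y, xs ! 1} \<in> E" using yE by (simp add: insert_commute)
  have "\<forall>e'\<in>E. y \<in> e' \<longrightarrow> e' = e"
  proof (cases "y \<in> set xs")
    case True
    then obtain j where j: "j < length xs" "xs ! j = y" by (auto simp: in_set_conv_nth)
    have "j \<noteq> 1" using j(2) y(1) by metis
    moreover have "j \<noteq> 2" using j(2) y(2) assms(6) by metis
    moreover have "\<not> 3 \<le> j"
    proof
      assume "3 \<le> j"
      then show False using chord[OF assms(1) p, of 1 j] j yE by simp
    qed
    ultimately have "j = 0" by simp
    then have y0: "y = xs ! 0" using j(2) by simp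
    show ?thesis
    proof (intro ballI impI)
      fix e' assume "e' \<in> E" "y \<in> e'"
      then have "e' = {xs ! 0, xs ! 1}" using hd_nbr[OF assms(1,2)] assms(3) y0 by simp
      then show "e' = e" using y(2) y0 by (simp add: insert_commute)
    qed
  next
    case False
    show ?thesis
    proof (intro ballI impI)
      fix e' assume e': "e' \<in> E" "y \<in> e'"
      obtain z where z: "z \<noteq> y" "e' = {y, z}" "z \<in> V" using sg_edge_at[OF sg e'] by blast
      have yz: "{y, z} \<in> E" using e'(1) z(2) by simp
      show "e' = e"
      proof (cases "z = xs ! 1")
        case True
        then show ?thesis using z(2) y(2) by (simp add: insert_commute)
      next
        case zne: False
        show ?thesis
        proof (cases "z \<in> set xs")
          case True
          then obtain j where j: "j < length xs" "xs ! j = z" by (auto simp: in_set_conv_nth)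
          have "j \<noteq> 1" using j(2) zne by metis
          then have "j < 1 \<or> 1 < j" by arith
          then show ?thesis
          proof
            assume "j < 1"
            moreover have "{y, xs ! j} \<in> E" using yz j(2) by simp
            ultimately have False
              using outside[OF assms(1) p False, of j 1] assms(3) ye by simp
            then show ?thesis ..
          next
            assume "1 < j"
            moreover have "{y, xs ! j} \<in> E" using yz j(2) by simp
            ultimately have False
              using outside[OF assms(1) p False, of 1 j] j(1) ye by simp
            then show ?thesis ..
          qed
        next
          case zn: False
          have "y \<in> V" using sg_pair[OF sg yE] by simp
          obtain a b rest where xs: "xs = a # b # rest" using assms(3)
            by (cases xs; cases "tl xs") auto
          have "pth V E (z # y # b # rest)"
            using p False zn z(1,3) \<open>y \<in> V\<close> yz ye unfolding xs pth_def
            by (auto simp: insert_commute)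
          then have "length (z # y # b # rest) \<le> length xs" using assms(2) unfolding lp_def by blast
          then show ?thesis using xs by simp
        qed
      qed
    qed
  qed
  then show ?thesis using y by blast
qed

lemma card2_other:
  assumes "2 \<le> card V" "v \<in> V"
  shows "\<exists>t\<in>V. t \<noteq> v"
proof (rule ccontr)
  assume "\<not> ?thesis"
  then have "V \<subseteq> {v}" by blast
  then have "card V \<le> card {v}" by (intro card_mono) auto
  then show False using assms(1) by simp
qed

lemma card2_two:
  assumes "2 \<le> card V"
  shows "\<exists>u\<in>V. \<exists>t\<in>V. u \<noteq> t"
proof -
  have "V \<noteq> {}" using assms by auto
  then obtain u where "u \<in> V" by blast
  then show ?thesis using card2_other[OF assms] by blast
qed

lemma card_le2: "card {a, b} \<le> 2"
  by (simp add: card_insert_le_m1)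

lemma adj_sym: "(a, b) \<in> (adj_rel S)\<^sup>* \<Longrightarrow> (b, a) \<in> (adj_rel S)\<^sup>*"
proof (induction rule: rtrancl_induct)
  case base
  then show ?case by simp
next
  case (step y z)
  then have "(z, y) \<in> adj_rel S" by (auto simp: adj_rel_def insert_commute)
  then show ?case using step(3) by (rule converse_rtrancl_into_rtrancl)
qed

lemma edge_exists:
  assumes "is_tree V E" "2 \<le> card V"
  shows "\<exists>a b. {a, b} \<in> E"
proof -
  obtain u t where "u \<in> V" "t \<in> V" "u \<noteq> t" using card2_two[OF assms(2)] by blast
  then show ?thesis using conn_edge[OF tree_conn[OF assms(1)], of u "{u}" t] by auto
qed

lemma lp_len2:
  assumes "is_tree V E" "2 \<le> card V" "lp V E xs"
  shows "2 \<le> length xs"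
proof -
  obtain a b where ab: "{a, b} \<in> E" using edge_exists[OF assms(1,2)] by blast
  then have "pth V E [a, b]" using sg_pair[OF tree_sg[OF assms(1)] ab] by (auto simp: pth_def)
  then show ?thesis using assms(3) unfolding lp_def by fastforce
qed

lemma lp_len3:
  assumes "is_tree V E" "3 \<le> card V" "lp V E xs"
  shows "3 \<le> length xs"
proof (rule ccontr)
  assume "\<not> 3 \<le> length xs"
  moreover have "2 \<le> length xs" using lp_len2[OF assms(1) _ assms(3)] assms(2) by simp
  ultimately obtain a b where xs: "xs = [a, b]"
    by (cases xs; cases "tl xs"; cases "tl (tl xs)") auto
  have sg: "simple_graph V E" using assms(1) by (rule tree_sg)
  have "set xs \<subseteq> V" using assms(3) by (simp add: lp_def pth_def)
  have "\<not> V \<subseteq> {a, b}"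
  proof
    assume "V \<subseteq> {a, b}"
    then have "card V \<le> card {a, b}" by (intro card_mono) auto
    then have "card V \<le> 2" using card_le2[of a b] by linarith
    then show False using assms(2) by simp
  qed
  then obtain t where "t \<in> V" "t \<notin> {a, b}" by blast
  then obtain p q where pq: "{p, q} \<in> E" "p \<in> {a, b}" "q \<notin> {a, b}"
    using conn_edge[OF tree_conn[OF assms(1)], of a "{a, b}" t] \<open>set xs \<subseteq> V\<close> xs by auto
  show False
  proof (cases "p = a")
    case True
    then have "q \<in> set xs" using lp_hd[OF sg assms(3)] pq(1) xs by simp
    then show False using pq(3) xs by simp
  next
    case False
    then have "p = b" using pq(2) by simp
    then have "q \<in> set xs" using lp_last[OF sg assms(3)] pq(1) xs by simp
    then show False using pq(3) xs by simp
  qed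
qed

lemma deg_pos:
  assumes "is_tree V E" "2 \<le> card V" "v \<in> V"
  shows "1 \<le> degree E v"
proof -
  obtain t where "t \<in> V" "t \<noteq> v" using card2_other[OF assms(2,3)] by blast
  then obtain p q where pq: "{p, q} \<in> E" "p = v"
    using conn_edge[OF tree_conn[OF assms(1)], of v "{v}" t] assms(3) by auto
  have "finite E" using sg_finite_E[OF tree_sg[OF assms(1)]] .
  then have "finite {e \<in> E. v \<in> e}" by simp
  moreover have "{p, q} \<in> {e \<in> E. v \<in> e}" using pq by simp
  ultimately have "card {e \<in> E. v \<in> e} \<noteq> 0" by auto
  then show ?thesis unfolding degree_def by simp
qed

lemma leaf_remove:
  assumes "is_tree V E" "{v, w} \<in> E" "v \<noteq> w" "\<forall>e\<in>E. w \<in> e \<longrightarrow> e = {v, w}"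
    "2 \<le> card V"
  shows "is_tree (V - {w}) (E - {{v, w}})"
proof -
  let ?E = "E - {{v, w}}"
  have sg: "simple_graph V E" using assms(1) by (rule tree_sg)
  have vV: "v \<in> V" "w \<in> V" using sg_pair[OF sg assms(2)] by auto
  have sg': "simple_graph (V - {w}) ?E"
    using sg assms(4) unfolding simple_graph_def by auto
  have reach: "(x, v) \<in> (adj_rel ?E)\<^sup>*" if x: "x \<in> V" "x \<noteq> w" for x
  proof -
    have xv: "(x, v) \<in> (adj_rel E)\<^sup>*" using tree_conn[OF assms(1)] x vV
      unfolding connected_graph_def by blast
    have "\<And>y. (x, y) \<in> (adj_rel E)\<^sup>* \<Longrightarrow>
        ((x, y) \<in> (adj_rel ?E)\<^sup>* \<and> y \<noteq> w) \<or> (y = w \<and> (x, v) \<in> (adj_rel ?E)\<^sup>*)"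
    proof -
      fix y assume "(x, y) \<in> (adj_rel E)\<^sup>*"
      then show "((x, y) \<in> (adj_rel ?E)\<^sup>* \<and> y \<noteq> w) \<or> (y = w \<and> (x, v) \<in> (adj_rel ?E)\<^sup>*)"
      proof (induction rule: rtrancl_induct)
        case base
        then show ?case using x by simp
      next
        case (step y z)
        have yz: "{y, z} \<in> E" using step(2) by (simp add: adj_rel_def)
        show ?case
        proof (cases "{y, z} = {v, w}")
          case False
          then have "y \<noteq> w" "z \<noteq> w" using assms(4) yz by (auto simp: insert_commute)
          then have "(x, y) \<in> (adj_rel ?E)\<^sup>*" using step(3) by blast
          moreover have "(y, z) \<in> adj_rel ?E" using yz False by (simp add: adj_rel_def)
          ultimately have "(x, z) \<in> (adj_rel ?E)\<^sup>*" by (rule rtrancl_into_rtrancl)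
          then show ?thesis using \<open>z \<noteq> w\<close> by simp
        next
          case True
          then have "(y = v \<and> z = w) \<or> (y = w \<and> z = v)" using assms(3) by (auto simp: doubleton_eq_iff)
          then show ?thesis
          proof
            assume "y = v \<and> z = w"
            then show ?thesis using step(3) assms(3) by auto
          next
            assume "y = w \<and> z = v"
            then show ?thesis using step(3) assms(3) by auto
          qed
        qed
      qed
    qed
    from this[OF xv] show ?thesis using assms(3) by auto
  qed
  have conn: "connected_graph (V - {w}) ?E"
    unfolding connected_graph_def
  proof (intro ballI)
    fix x y assume "x \<in> V - {w}" "y \<in> V - {w}"
    then have "(x, v) \<in> (adj_rel ?E)\<^sup>*" "(y, v) \<in> (adj_rel ?E)\<^sup>*" using reach by auto
    then show "(x, y) \<in> (adj_rel ?E)\<^sup>*" using adj_sym by (metis rtrancl_trans)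
  qed
  have nc: "\<not> (\<exists>vs. is_cycle ?E vs)"
  proof
    assume "\<exists>vs. is_cycle ?E vs"
    then obtain vs where "is_cycle ?E vs" by blast
    then have "is_cycle E vs" unfolding is_cycle_def by auto
    then show False using tree_nocyc[OF assms(1)] by blast
  qed
  have "V - {w} \<noteq> {}" using vV assms(3) by auto
  then show ?thesis using sg' conn nc unfolding is_tree_def by blast
qed

lemma tree_card_E:
  assumes "is_tree V E"
  shows "card E = card V - 1"
  using assms
proof (induction "card V" arbitrary: V E rule: less_induct)
  case less
  have sg: "simple_graph V E" using less(2) by (rule tree_sg)
  have fin: "finite V" using tree_finite[OF less(2)] .
  have "V \<noteq> {}" using less(2) unfolding is_tree_def by blast
  then have c1: "1 \<le> card V" using fin by (simp add: card_gt_0_iff Suc_le_eq)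
  show ?case
  proof (cases "card V = 1")
    case True
    then obtain x where "V = {x}" by (auto simp add: card_1_singleton_iff)
    have "E = {}"
    proof (rule equals0I)
      fix e assume "e \<in> E"
      then have "card e = 2" "e \<subseteq> {x}" using sg \<open>V = {x}\<close> unfolding simple_graph_def by auto
      moreover from this(2) have "card e \<le> card {x}" by (intro card_mono) auto
      ultimately show False by simp
    qed
    then show ?thesis using True by simp
  next
    case False
    then have c2: "2 \<le> card V" using c1 by simp
    obtain xs where xs: "lp V E xs" using lp_exists[OF fin] by blast
    have l2: "2 \<le> length xs" using lp_len2[OF less(2) c2 xs] .
    let ?v = "xs ! 1" and ?w = "xs ! 0"
    have "wk E xs" using xs by (simp add: lp_def pth_def)
    then have "{?w, ?v} \<in> E" using l2 unfolding wk_nth by (metis One_nat_def Suc_1 Suc_le_lessD)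
    then have e: "{?v, ?w} \<in> E" by (simp add: insert_commute)
    have ne: "?v \<noteq> ?w" using sg_pair[OF sg e] by simp
    have lf: "\<forall>e\<in>E. ?w \<in> e \<longrightarrow> e = {?v, ?w}"
    proof (intro ballI impI)
      fix e assume ee: "e \<in> E" "?w \<in> e"
      have "e = {?w, ?v}" using hd_nbr[OF less(2) xs l2 ee] .
      then show "e = {?v, ?w}" by (simp add: insert_commute)
    qed
    have t: "is_tree (V - {?w}) (E - {{?v, ?w}})" using leaf_remove[OF less(2) e ne lf c2] .
    have wV: "?w \<in> V" using sg_pair[OF sg e] by simp
    have "card (V - {?w}) < card V" using card_Diff1_less[OF fin wV] .
    then have "card (E - {{?v, ?w}}) = card (V - {?w}) - 1" using t by (rule less(1))
    moreover have "card (E - {{?v, ?w}}) = card E - 1" using e by (rule card_Diff_singleton)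
    moreover have "card (V - {?w}) = card V - 1" using wV by (rule card_Diff_singleton)
    moreover have "0 < card E" using e sg_finite_E[OF sg] by (auto simp: card_gt_0_iff)
    ultimately show ?thesis using c2 by arith
  qed
qed

lemma both_leaf_false:
  assumes "is_tree V E" "3 \<le> card V" "{a, b} \<in> E"
    "\<forall>e\<in>E. a \<in> e \<longrightarrow> e = {a, b}" "\<forall>e\<in>E. b \<in> e \<longrightarrow> e = {a, b}"
  shows False
proof -
  have sg: "simple_graph V E" using assms(1) by (rule tree_sg)
  have aV: "a \<in> V" using sg_pair[OF sg assms(3)] by simp
  have fin: "finite V" using tree_finite[OF assms(1)] .
  have "\<not> V \<subseteq> {a, b}"
  proof
    assume "V \<subseteq> {a, b}"
    then have "card V \<le> card {a, b}" by (intro card_mono) auto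
    also have "\<dots> \<le> 2" by (rule card_le2)
    finally show False using assms(2) by simp
  qed
  then obtain t where t: "t \<in> V" "t \<notin> {a, b}" by blast
  have "(a, t) \<in> (adj_rel E)\<^sup>*" using tree_conn[OF assms(1)] aV t(1)
    unfolding connected_graph_def by blast
  moreover have "\<And>p q. {p, q} \<in> E \<Longrightarrow> p \<in> {a, b} \<Longrightarrow> q \<in> {a, b}"
  proof -
    fix p q assume pq: "{p, q} \<in> E" "p \<in> {a, b}"
    have "{p, q} = {a, b}"
    proof (cases "p = a")
      case True
      then show ?thesis using assms(4) pq(1) by simp
    next
      case False
      then have "p = b" using pq(2) by simp
      then show ?thesis using assms(5) pq(1) by simp
    qed
    moreover have "q \<in> {p, q}" by simp
    ultimately show "q \<in> {a, b}" by simp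
  qed
  ultimately have "t \<in> {a, b}" using closure_reach[of a t E "{a, b}"] by simp
  then show False using t(2) by simp
qed

section \<open>Shelling recursion\<close>

definition LE :: "'a set set \<Rightarrow> 'a set set" where
  "LE E = {e \<in> E. \<exists>w\<in>e. \<forall>e'\<in>E. w \<in> e' \<longrightarrow> e' = e}"

lemma shell_fin:
  assumes "finite E"
  shows "finite {\<sigma>. is_shelling E \<sigma>}"
proof (rule finite_subset)
  show "{\<sigma>. is_shelling E \<sigma>} \<subseteq> {xs. set xs \<subseteq> E \<and> length xs \<le> card E}"
  proof
    fix \<sigma> assume "\<sigma> \<in> {\<sigma>. is_shelling E \<sigma>}"
    then have "distinct \<sigma>" "set \<sigma> = E" by (auto simp: is_shelling_def)
    moreover have "card (set \<sigma>) = length \<sigma>" using \<open>distinct \<sigma>\<close> by (rule distinct_card)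
    ultimately show "\<sigma> \<in> {xs. set xs \<subseteq> E \<and> length xs \<le> card E}" by simp
  qed
  show "finite {xs. set xs \<subseteq> E \<and> length xs \<le> card E}" using finite_lists_length_le[OF assms] .
qed

lemma tree_edges_connected:
  assumes "is_tree V E"
  shows "edges_connected E"
proof -
  have "\<Union>E \<subseteq> V" using tree_sg[OF assms] unfolding simple_graph_def by blast
  then show ?thesis using tree_conn[OF assms] unfolding edges_connected_def connected_graph_def
    by blast
qed

lemma shell_snoc:
  assumes "is_tree V E" "l \<in> E" "is_shelling (E - {l}) \<sigma>"
  shows "is_shelling E (\<sigma> @ [l])"
proof -
  have d: "distinct \<sigma>" and s: "set \<sigma> = E - {l}"
    and c: "\<forall>k\<in>{1..length \<sigma>}. edges_connected (set (take k \<sigma>))"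
    using assms(3) by (auto simp: is_shelling_def)
  have "distinct (\<sigma> @ [l])" using d s by simp
  moreover have "set (\<sigma> @ [l]) = E" using s assms(2) by auto
  moreover have "\<forall>k\<in>{1..length (\<sigma> @ [l])}. edges_connected (set (take k (\<sigma> @ [l])))"
  proof
    fix k assume k: "k \<in> {1..length (\<sigma> @ [l])}"
    show "edges_connected (set (take k (\<sigma> @ [l])))"
    proof (cases "k \<le> length \<sigma>")
      case True
      then show ?thesis using c k by simp
    next
      case False
      then have "take k (\<sigma> @ [l]) = \<sigma> @ [l]" using k by simp
      then show ?thesis using \<open>set (\<sigma> @ [l]) = E\<close> tree_edges_connected[OF assms(1)] by simp
    qed
  qed
  ultimately show ?thesis by (simp add: is_shelling_def)
qed

lemma shell_last0:
  assumes "is_tree V E" "is_shelling E (s0 @ [l])"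
  shows "l \<in> LE E \<and> is_shelling (E - {l}) s0"
proof -
  have sg: "simple_graph V E" using tree_sg[OF assms(1)] .
  have d: "distinct (s0 @ [l])" and s: "set (s0 @ [l]) = E"
    and c: "\<forall>k\<in>{1..length (s0 @ [l])}. edges_connected (set (take k (s0 @ [l])))"
    using assms(2) by (auto simp: is_shelling_def)
  have lE: "l \<in> E" using s by auto
  have d': "distinct s0" "l \<notin> set s0" using d by auto
  have s': "set s0 = E - {l}" using s d'(2) by auto
  have c': "\<forall>k\<in>{1..length s0}. edges_connected (set (take k s0))"
  proof
    fix k assume k: "k \<in> {1..length s0}"
    then have "take k (s0 @ [l]) = take k s0" by simp
    moreover have "k \<in> {1..length (s0 @ [l])}" using k by auto
    ultimately show "edges_connected (set (take k s0))" using c by metis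
  qed
  have shell: "is_shelling (E - {l}) s0" using d'(1) s' c' by (simp add: is_shelling_def)
  obtain a b where ab: "a \<noteq> b" "l = {a, b}" using sg_edge[OF sg lE] by blast
  have "\<not> (a \<in> \<Union>(E - {l}) \<and> b \<in> \<Union>(E - {l}))"
  proof
    assume both: "a \<in> \<Union>(E - {l}) \<and> b \<in> \<Union>(E - {l})"
    then have "E - {l} \<noteq> {}" by blast
    then have "s0 \<noteq> []" using s' by (metis empty_set)
    then have "length s0 \<in> {1..length s0}" by (simp add: Suc_le_eq)
    then have "edges_connected (set (take (length s0) s0))" using c' by blast
    then have "edges_connected (set s0)" by simp
    then have "connected_graph (\<Union>(E - {l})) (E - {l})" using s' unfolding edges_connected_def by simp
    then have cg: "\<forall>u\<in>\<Union>(E - {l}). \<forall>v\<in>\<Union>(E - {l}). (u, v) \<in> (adj_rel (E - {l}))\<^sup>*"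
      unfolding connected_graph_def .
    have "a \<in> \<Union>(E - {l})" "b \<in> \<Union>(E - {l})" using both by auto
    then have "(a, b) \<in> (adj_rel (E - {l}))\<^sup>*" using cg by blast
    from rtrancl_walk[OF this] obtain xs where
      xs: "xs \<noteq> []" "hd xs = a" "last xs = b" "distinct xs" "wk (E - {l}) xs"
      by blast
    have "length xs \<noteq> 1" using xs ab(1) by (cases xs) auto
    moreover have "length xs \<noteq> 2"
    proof
      assume "length xs = 2"
      then obtain p q where "xs = [p, q]" by (cases xs; cases "tl xs") auto
      then have "{a, b} \<in> E - {l}" using xs by simp
      then show False using ab(2) by simp
    qed
    moreover have "0 < length xs" using xs(1) by simp
    ultimately have "3 \<le> length xs" by linarith
    moreover have "wk E xs" using xs(5) by (rule wk_mono) auto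
    moreover have "{last xs, hd xs} \<in> E" using xs(2,3) ab(2) lE by (simp add: insert_commute)
    ultimately have "is_cycle E xs" using xs(4) by (intro cycle_intro) auto
    then show False using tree_nocyc[OF assms(1)] by blast
  qed
  then have "(\<forall>e'\<in>E. a \<in> e' \<longrightarrow> e' = l) \<or> (\<forall>e'\<in>E. b \<in> e' \<longrightarrow> e' = l)" by blast
  then have "l \<in> LE E" unfolding LE_def using lE ab(2) by blast
  then show ?thesis using shell by simp
qed

lemma shell_rec:
  assumes "is_tree V E" "E \<noteq> {}"
  shows "F E = (\<Sum>l\<in>LE E. F (E - {l}))"
proof -
  have finE: "finite E" using sg_finite_E[OF tree_sg[OF assms(1)]] .
  have finL: "finite (LE E)" using finE unfolding LE_def by simp
  let ?A = "\<lambda>l. (\<lambda>\<sigma>. \<sigma> @ [l]) ` {\<sigma>. is_shelling (E - {l}) \<sigma>}"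
  have eq: "{\<sigma>. is_shelling E \<sigma>} = (\<Union>l\<in>LE E. ?A l)"
  proof
    show "{\<sigma>. is_shelling E \<sigma>} \<subseteq> (\<Union>l\<in>LE E. ?A l)"
    proof
      fix \<sigma> assume "\<sigma> \<in> {\<sigma>. is_shelling E \<sigma>}"
      then have sh: "is_shelling E \<sigma>" by simp
      then have "\<sigma> \<noteq> []" using assms(2) by (auto simp: is_shelling_def)
      then obtain s0 l where sl: "\<sigma> = s0 @ [l]" by (metis rev_exhaust)
      then have "l \<in> LE E" "is_shelling (E - {l}) s0"
        using shell_last0[OF assms(1)] sh by auto
      then show "\<sigma> \<in> (\<Union>l\<in>LE E. ?A l)" using sl by blast
    qed
    show "(\<Union>l\<in>LE E. ?A l) \<subseteq> {\<sigma>. is_shelling E \<sigma>}"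
    proof
      fix \<sigma> assume "\<sigma> \<in> (\<Union>l\<in>LE E. ?A l)"
      then obtain l \<sigma>' where "l \<in> LE E" "is_shelling (E - {l}) \<sigma>'" "\<sigma> = \<sigma>' @ [l]" by blast
      moreover have "l \<in> E" using \<open>l \<in> LE E\<close> unfolding LE_def by simp
      ultimately show "\<sigma> \<in> {\<sigma>. is_shelling E \<sigma>}" using shell_snoc[OF assms(1)] by simp
    qed
  qed
  have "F E = card (\<Union>l\<in>LE E. ?A l)" unfolding num_shellings_def eq ..
  also have "\<dots> = (\<Sum>l\<in>LE E. card (?A l))"
  proof (rule card_UN_disjoint[OF finL])
    show "\<forall>l\<in>LE E. finite (?A l)"
    proof
      fix l
      have "finite (E - {l})" using finE by simp
      then show "finite (?A l)" by (rule finite_imageI[OF shell_fin])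
    qed
    show "\<forall>i\<in>LE E. \<forall>j\<in>LE E. i \<noteq> j \<longrightarrow> ?A i \<inter> ?A j = {}" by auto
  qed
  also have "\<dots> = (\<Sum>l\<in>LE E. F (E - {l}))"
  proof (rule sum.cong[OF refl])
    fix l assume "l \<in> LE E"
    have "inj (\<lambda>\<sigma>. \<sigma> @ [l])" by (simp add: inj_on_def)
    then have "card (?A l) = card {\<sigma>. is_shelling (E - {l}) \<sigma>}" by (simp add: card_image inj_on_subset)
    then show "card (?A l) = F (E - {l})" by (simp add: num_shellings_def)
  qed
  finally show ?thesis .
qed

section \<open>Degrees and products\<close>

definition PP :: "'a set \<Rightarrow> 'a set set \<Rightarrow> nat" where
  "PP V E = (\<Prod>v\<in>V. fact (degree E v))"

lemma deg_other:
  assumes "x \<notin> l"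
  shows "degree (E - {l}) x = degree E x"
proof -
  have "{e \<in> E - {l}. x \<in> e} = {e \<in> E. x \<in> e}" using assms by blast
  then show ?thesis unfolding degree_def by simp
qed

lemma deg_minus:
  assumes "l \<in> E" "x \<in> l"
  shows "degree (E - {l}) x = degree E x - 1"
proof -
  have "{e \<in> E - {l}. x \<in> e} = {e \<in> E. x \<in> e} - {l}" by blast
  moreover have "l \<in> {e \<in> E. x \<in> e}" using assms by simp
  ultimately show ?thesis unfolding degree_def by (simp add: card_Diff_singleton)
qed

lemma deg_leaf:
  assumes "l \<in> E" "w \<in> l" "\<forall>e\<in>E. w \<in> e \<longrightarrow> e = l"
  shows "degree E w = 1"
proof -
  have "{e \<in> E. w \<in> e} = {l}" using assms by blast
  then show ?thesis unfolding degree_def by simp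
qed

lemma deg_ge1:
  assumes "finite E" "l \<in> E" "x \<in> l"
  shows "1 \<le> degree E x"
proof -
  have "l \<in> {e \<in> E. x \<in> e}" using assms by simp
  moreover have "finite {e \<in> E. x \<in> e}" using assms(1) by simp
  ultimately have "card {e \<in> E. x \<in> e} \<noteq> 0" by (metis card_0_eq empty_iff)
  then show ?thesis unfolding degree_def by simp
qed

lemma prod_remove:
  assumes "simple_graph V E" "{v, w} \<in> E" "v \<noteq> w" "\<forall>e\<in>E. w \<in> e \<longrightarrow> e = {v, w}"
  shows "PP V E = degree E v * PP (V - {w}) (E - {{v, w}})"
proof -
  let ?l = "{v, w}" and ?E = "E - {{v, w}}"
  have fin: "finite V" using assms(1) by (simp add: simple_graph_def)
  have finE: "finite E" using sg_finite_E[OF assms(1)] .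
  have vw: "v \<in> V" "w \<in> V" using sg_pair[OF assms(1,2)] by auto
  have dw: "degree E w = 1" using deg_leaf[OF assms(2) _ assms(4)] by simp
  have dv: "degree ?E v = degree E v - 1" using deg_minus[OF assms(2)] by simp
  have dv1: "1 \<le> degree E v" using deg_ge1[OF finE assms(2)] by simp
  have fv: "fact (degree E v) = degree E v * (fact (degree ?E v) :: nat)"
  proof -
    obtain k where k: "degree E v = Suc k" using dv1 by (metis Suc_le_D One_nat_def)
    then show ?thesis using dv by simp
  qed
  have vV': "v \<in> V - {w}" using vw assms(3) by simp
  have "PP V E = fact (degree E w) * (\<Prod>x\<in>V - {w}. fact (degree E x))"
    unfolding PP_def using prod.remove[OF fin vw(2)] .
  also have "\<dots> = (\<Prod>x\<in>V - {w}. fact (degree E x))" using dw by simp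
  also have "\<dots> = fact (degree E v) * (\<Prod>x\<in>V - {w} - {v}. fact (degree E x))"
    using prod.remove[of "V - {w}" v] fin vV' by simp
  also have "(\<Prod>x\<in>V - {w} - {v}. fact (degree E x)) = (\<Prod>x\<in>V - {w} - {v}. fact (degree ?E x))"
  proof (rule prod.cong[OF refl])
    fix x assume "x \<in> V - {w} - {v}"
    then have "x \<notin> ?l" by simp
    then show "fact (degree E x) = fact (degree ?E x)" using deg_other by metis
  qed
  also have "fact (degree E v) * (\<Prod>x\<in>V - {w} - {v}. fact (degree ?E x))
      = degree E v * (fact (degree ?E v) * (\<Prod>x\<in>V - {w} - {v}. fact (degree ?E x)))"
    using fv by simp
  also have "fact (degree ?E v) * (\<Prod>x\<in>V - {w} - {v}. fact (degree ?E x)) = PP (V - {w}) ?E"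
  proof -
    have "finite (V - {w})" using fin by simp
    from prod.remove[OF this vV', of "\<lambda>x. fact (degree ?E x)"] show ?thesis
      unfolding PP_def by (rule sym)
  qed
  finally show ?thesis .
qed

lemma PP_pos: "finite V \<Longrightarrow> 0 < PP V E"
  unfolding PP_def by (simp add: prod_pos)

definition lv :: "'a set set \<Rightarrow> 'a set \<Rightarrow> 'a" where
  "lv E l = (SOME w. w \<in> l \<and> (\<forall>e'\<in>E. w \<in> e' \<longrightarrow> e' = l))"

definition QQ :: "'a set \<Rightarrow> 'a set set \<Rightarrow> 'a set \<Rightarrow> nat" where
  "QQ V E l = PP (V - {lv E l}) (E - {l})"

lemma pair_eq:
  assumes "{a, b} = l" "w \<in> l" "u \<in> l" "w \<noteq> u"
  shows "l = {w, u}"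
proof -
  have "w = a \<or> w = b" "u = a \<or> u = b" using assms(1,2,3) by blast+
  then show ?thesis using assms(1,4) by (metis insert_commute)
qed

lemma lv_eq:
  assumes "is_tree V E" "3 \<le> card V" "l \<in> E" "w \<in> l" "\<forall>e'\<in>E. w \<in> e' \<longrightarrow> e' = l"
  shows "lv E l = w"
proof (rule ccontr)
  assume ne: "lv E l \<noteq> w"
  have "\<exists>w. w \<in> l \<and> (\<forall>e'\<in>E. w \<in> e' \<longrightarrow> e' = l)" using assms(4,5) by blast
  then have "lv E l \<in> l \<and> (\<forall>e'\<in>E. lv E l \<in> e' \<longrightarrow> e' = l)"
    unfolding lv_def by (rule someI_ex)
  then have w': "lv E l \<in> l" "\<forall>e'\<in>E. lv E l \<in> e' \<longrightarrow> e' = l" by blast+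
  obtain a b where ab: "a \<noteq> b" "l = {a, b}" using sg_edge[OF tree_sg[OF assms(1)] assms(3)] by blast
  obtain u where u: "u = lv E l" by blast
  have u1: "u \<in> l" using w'(1) by (simp only: u[symmetric])
  have u2: "w \<noteq> u" using ne by (simp only: u[symmetric]) simp
  have leq: "l = {w, u}" using pair_eq[OF ab(2)[symmetric] assms(4) u1 u2] .
  have e: "{w, u} \<in> E" using assms(3) leq by simp
  have h1: "\<forall>e\<in>E. w \<in> e \<longrightarrow> e = {w, u}" using assms(5) leq by simp
  have w2: "\<forall>e'\<in>E. u \<in> e' \<longrightarrow> e' = l" using w'(2) by (simp only: u[symmetric])
  have h2: "\<forall>e\<in>E. u \<in> e \<longrightarrow> e = {w, u}" using w2 leq by simp
  show False by (rule both_leaf_false[OF assms(1,2) e h1 h2])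
qed

lemma supp_Q:
  assumes "is_tree V E" "3 \<le> card V" "{c, y} \<in> E" "c \<noteq> y" "\<forall>e\<in>E. y \<in> e \<longrightarrow> e = {c, y}"
  shows "PP V E = degree E c * QQ V E {c, y}"
proof -
  have "lv E {c, y} = y" using lv_eq[OF assms(1,2,3)] assms(5) by simp
  then show ?thesis unfolding QQ_def using prod_remove[OF tree_sg[OF assms(1)] assms(3,4,5)] by simp
qed

lemma LE_data:
  assumes "is_tree V E" "3 \<le> card V" "l \<in> LE E"
  shows "\<exists>v w. l = {v, w} \<and> v \<noteq> w \<and> (\<forall>e\<in>E. w \<in> e \<longrightarrow> e = {v, w}) \<and> lv E l = w"
proof -
  have lE: "l \<in> E" and "\<exists>w\<in>l. \<forall>e'\<in>E. w \<in> e' \<longrightarrow> e' = l" using assms(3) unfolding LE_def by auto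
  then obtain w where w: "w \<in> l" "\<forall>e'\<in>E. w \<in> e' \<longrightarrow> e' = l" by blast
  obtain v where v: "v \<noteq> w" "l = {w, v}" using sg_edge_at[OF tree_sg[OF assms(1)] lE w(1)] by blast
  have "l = {v, w}" using v(2) by (simp add: insert_commute)
  moreover have "lv E l = w" using lv_eq[OF assms(1,2) lE w] .
  ultimately show ?thesis using v(1) w(2) by blast
qed

lemma sum_supp:
  assumes "is_tree V E" "3 \<le> card V" "A \<subseteq> E"
    "\<And>e. e \<in> A \<Longrightarrow> \<exists>y. y \<noteq> c \<and> e = {c, y} \<and> (\<forall>e'\<in>E. y \<in> e' \<longrightarrow> e' = e)"
  shows "degree E c * (\<Sum>l\<in>A. QQ V E l) = card A * PP V E" "A \<subseteq> LE E"
proof -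
  have "\<And>l. l \<in> A \<Longrightarrow> degree E c * QQ V E l = PP V E"
  proof -
    fix l assume l: "l \<in> A"
    then obtain y where y: "y \<noteq> c" "l = {c, y}" "\<forall>e'\<in>E. y \<in> e' \<longrightarrow> e' = l" using assms(4) by blast
    have e: "{c, y} \<in> E" using l y(2) assms(3) by blast
    have y3': "\<forall>e\<in>E. y \<in> e \<longrightarrow> e = {c, y}" using y(3) unfolding y(2) .
    have "PP V E = degree E c * QQ V E {c, y}" using supp_Q[OF assms(1,2) e y(1)[symmetric] y3'] .
    then show "degree E c * QQ V E l = PP V E" using y(2) by simp
  qed
  then have "(\<Sum>l\<in>A. degree E c * QQ V E l) = (\<Sum>l\<in>A. PP V E)" by simp
  then show "degree E c * (\<Sum>l\<in>A. QQ V E l) = card A * PP V E" by (simp add: sum_distrib_left)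
  show "A \<subseteq> LE E"
  proof
    fix l assume l: "l \<in> A"
    then obtain y where y: "y \<noteq> c" "l = {c, y}" "\<forall>e'\<in>E. y \<in> e' \<longrightarrow> e' = l" using assms(4) by blast
    then show "l \<in> LE E" unfolding LE_def using l assms(3) by blast
  qed
qed

lemma handshake:
  assumes "simple_graph V E"
  shows "(\<Sum>v\<in>V. degree E v) = 2 * card E"
proof -
  have fin: "finite V" using assms by (simp add: simple_graph_def)
  have finE: "finite E" using sg_finite_E[OF assms] .
  have "(\<Sum>v\<in>V. degree E v) = (\<Sum>v\<in>V. \<Sum>e\<in>E. (of_bool (v \<in> e) :: nat))"
  proof (rule sum.cong[OF refl])
    fix v assume "v \<in> V"
    have "{e \<in> E. v \<in> e} = E \<inter> {e. v \<in> e}" by blast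
    then show "degree E v = (\<Sum>e\<in>E. (of_bool (v \<in> e) :: nat))"
      unfolding degree_def using finE by simp
  qed
  also have "\<dots> = (\<Sum>e\<in>E. \<Sum>v\<in>V. (of_bool (v \<in> e) :: nat))" by (rule sum.swap)
  also have "\<dots> = (\<Sum>e\<in>E. 2)"
  proof (rule sum.cong[OF refl])
    fix e assume e: "e \<in> E"
    have "V \<inter> {v. v \<in> e} = e" using assms e unfolding simple_graph_def by blast
    moreover have "card e = 2" using assms e unfolding simple_graph_def by blast
    ultimately show "(\<Sum>v\<in>V. (of_bool (v \<in> e) :: nat)) = 2" using fin by simp
  qed
  also have "\<dots> = 2 * card E" by simp
  finally show ?thesis .
qed

section \<open>Paths and stars\<close>

lemma three_edges:
  assumes "finite E" "e1 \<in> E" "e2 \<in> E" "e3 \<in> E" "x \<in> e1" "x \<in> e2" "x \<in> e3"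
    "e1 \<noteq> e2" "e1 \<noteq> e3" "e2 \<noteq> e3"
  shows "3 \<le> degree E x"
proof -
  have "{e1, e2, e3} \<subseteq> {e \<in> E. x \<in> e}" using assms by blast
  moreover have "finite {e \<in> E. x \<in> e}" using assms(1) by simp
  ultimately have "card {e1, e2, e3} \<le> card {e \<in> E. x \<in> e}" by (rule card_mono[rotated])
  moreover have "card {e1, e2, e3} = 3" using assms(8,9,10) by simp
  ultimately show ?thesis unfolding degree_def by simp
qed

lemma path_of_deg2:
  assumes "is_tree V E" "lp V E xs" "2 \<le> length xs" "\<forall>v\<in>V. degree E v \<le> 2"
  shows "is_path_graph V E"
proof -
  have sg: "simple_graph V E" using tree_sg[OF assms(1)] .
  have finE: "finite E" using sg_finite_E[OF sg] .
  have fin: "finite V" using tree_finite[OF assms(1)] .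
  have p: "pth V E xs" using assms(2) by (simp add: lp_def)
  have dxs: "distinct xs" and sV: "set xs \<subseteq> V" and wxs: "wk E xs" using p by (auto simp: pth_def)
  have ne: "xs \<noteq> []" using assms(3) by auto
  have Vs: "V = set xs"
  proof (rule ccontr)
    assume "V \<noteq> set xs"
    then obtain t where t: "t \<in> V" "t \<notin> set xs" using sV by blast
    have "xs ! 0 \<in> set xs" using ne by simp
    then obtain p q where pq: "{p, q} \<in> E" "p \<in> set xs" "q \<notin> set xs"
      using conn_edge[OF tree_conn[OF assms(1)] _ sV t] by blast
    obtain i where i: "i < length xs" "xs ! i = p" using pq(2) by (auto simp: in_set_conv_nth)
    show False
    proof (cases "i = 0")
      case True
      then have "hd xs = p" using i ne by (simp add: hd_conv_nth)
      then show False using lp_hd[OF sg assms(2) ne] pq by simp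
    next
      case i0: False
      show False
      proof (cases "i = length xs - 1")
        case True
        then have "last xs = p" using i ne by (simp add: last_conv_nth)
        then show False using lp_last[OF sg assms(2) ne] pq by simp
      next
        case False
        then have ii: "Suc i < length xs" "0 < i" using i i0 by auto
        obtain k where k: "i = Suc k" using ii(2) by (cases i) auto
        have ksuc: "Suc k < length xs" using i k by simp
        have e1: "{xs ! k, xs ! i} \<in> E" using wxs ksuc k unfolding wk_nth by blast
        have e2: "{xs ! i, xs ! Suc i} \<in> E" using wxs ii unfolding wk_nth by blast
        have n1: "xs ! k \<noteq> xs ! i" using dxs ksuc k by (simp add: nth_eq_iff_index_eq)
        have n2: "xs ! k \<noteq> xs ! Suc i" using dxs ii(1) k by (simp add: nth_eq_iff_index_eq)
        have n3: "xs ! i \<noteq> xs ! Suc i" using dxs ii by (simp add: nth_eq_iff_index_eq)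
        have m: "xs ! k \<in> set xs" "xs ! Suc i \<in> set xs" "xs ! i \<in> set xs"
          using ksuc ii(1) i(1) by (simp_all add: k)
        have q1: "q \<noteq> xs ! k" "q \<noteq> xs ! Suc i" "q \<noteq> xs ! i"
          using pq(3) m by metis+
        have "3 \<le> degree E p"
          using three_edges[OF finE e1 e2 pq(1)] i n1 n2 n3 q1 by (auto simp: doubleton_eq_iff)
        moreover have "degree E p \<le> 2" using assms(4) sV pq(2) by blast
        ultimately show False by simp
      qed
    qed
  qed
  let ?C = "(\<lambda>i. {xs ! i, xs ! Suc i}) ` {..<length xs - 1}"
  have CE: "?C \<subseteq> E" using wxs unfolding wk_nth by auto
  have inj: "inj_on (\<lambda>i. {xs ! i, xs ! Suc i}) {..<length xs - 1}"
  proof (rule inj_onI)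
    fix i j assume i: "i \<in> {..<length xs - 1}" and j: "j \<in> {..<length xs - 1}"
      and eq: "{xs ! i, xs ! Suc i} = {xs ! j, xs ! Suc j}"
    have "(xs ! i = xs ! j \<and> xs ! Suc i = xs ! Suc j) \<or> (xs ! i = xs ! Suc j \<and> xs ! Suc i = xs ! j)"
      using eq by (simp add: doubleton_eq_iff)
    then show "i = j"
    proof
      assume "xs ! i = xs ! j \<and> xs ! Suc i = xs ! Suc j"
      then show "i = j" using dxs i j by (simp add: nth_eq_iff_index_eq)
    next
      assume h: "xs ! i = xs ! Suc j \<and> xs ! Suc i = xs ! j"
      then have "i = Suc j" "Suc i = j" using dxs i j by (simp_all add: nth_eq_iff_index_eq)
      then show "i = j" by simp
    qed
  qed
  have "card ?C = length xs - 1" using card_image[OF inj] by simp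
  also have "\<dots> = card V - 1" using Vs dxs by (simp add: distinct_card)
  also have "\<dots> = card E" using tree_card_E[OF assms(1)] by simp
  finally have "?C = E" using card_subset_eq[OF finE CE] by simp
  moreover have "{{xs ! i, xs ! (i + 1)} | i. i + 1 < length xs} = ?C" by auto
  ultimately have "E = {{xs ! i, xs ! (i + 1)} | i. i + 1 < length xs}" by simp
  then show ?thesis unfolding is_path_graph_def using dxs Vs by blast
qed

lemma star_case:
  assumes "is_tree V E" "lp V E xs" "length xs = 3"
  shows "\<forall>e\<in>E. xs ! 1 \<in> e \<longrightarrow> (\<exists>y. y \<noteq> xs ! 1 \<and> e = {xs ! 1, y} \<and> (\<forall>e'\<in>E. y \<in> e' \<longrightarrow> e' = e))"
proof (intro ballI impI)
  fix e assume e: "e \<in> E" "xs ! 1 \<in> e"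
  obtain p c q where xs: "xs = [p, c, q]" using assms(3)
    by (cases xs; cases "tl xs"; cases "tl (tl xs)") auto
  have d: "p \<noteq> q" "c \<noteq> q" "p \<noteq> c" using assms(2) xs by (auto simp: lp_def pth_def)
  show "\<exists>y. y \<noteq> xs ! 1 \<and> e = {xs ! 1, y} \<and> (\<forall>e'\<in>E. y \<in> e' \<longrightarrow> e' = e)"
  proof (cases "e = {xs ! 1, xs ! 2}")
    case False
    then show ?thesis using nbr1[OF assms(1,2) _ e] assms(3) by simp
  next
    case True
    have r: "rev xs ! 1 = xs ! 1" "rev xs ! 2 = p" "length (rev xs) = 3" using xs by simp_all
    have "e \<noteq> {rev xs ! 1, rev xs ! 2}" using True xs d by (simp add: doubleton_eq_iff)
    then show ?thesis using nbr1[OF assms(1) lp_rev[OF assms(2)] _ e(1)] e(2) r by simp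
  qed
qed

lemma star_from:
  assumes "is_tree V E" "c \<in> V"
    "\<forall>e\<in>E. c \<in> e \<longrightarrow> (\<exists>y. y \<noteq> c \<and> e = {c, y} \<and> (\<forall>e'\<in>E. y \<in> e' \<longrightarrow> e' = e))"
  shows "is_star V E"
proof -
  have sg: "simple_graph V E" using tree_sg[OF assms(1)] .
  have lf: "\<forall>e'\<in>E. p \<in> e' \<longrightarrow> e' = {c, p}" if "{c, p} \<in> E" for p
  proof -
    from mp[OF bspec[OF assms(3) that] insertI1] obtain y where
      y: "y \<noteq> c" "{c, p} = {c, y}" "\<forall>e'\<in>E. y \<in> e' \<longrightarrow> e' = {c, p}"
      by blast
    have "p = y" using y(1,2) by (auto simp: doubleton_eq_iff)
    then show ?thesis using y(3) by simp
  qed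
  let ?S = "{r. r = c \<or> {c, r} \<in> E}"
  have cl: "q \<in> ?S" if pq: "{p, q} \<in> E" "p \<in> ?S" for p q
  proof (cases "p = c")
    case True
    then show ?thesis using pq(1) by simp
  next
    case False
    then have cp: "{c, p} \<in> E" using pq(2) by simp
    have "{p, q} = {c, p}" using mp[OF bspec[OF lf[OF cp] pq(1)] insertI1] .
    moreover have "q \<noteq> p" using sg_pair[OF sg pq(1)] by blast
    ultimately have "q = c" by (auto simp: doubleton_eq_iff)
    then show ?thesis by simp
  qed
  have allS: "r \<in> ?S" if "r \<in> V" for r
  proof -
    have "(c, r) \<in> (adj_rel E)\<^sup>*" using tree_conn[OF assms(1)] assms(2) that
      unfolding connected_graph_def by blast
    then show ?thesis using closure_reach[of c r E ?S] cl by blast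
  qed
  have "E = {{c, v} | v. v \<in> V \<and> v \<noteq> c}"
  proof
    show "E \<subseteq> {{c, v} | v. v \<in> V \<and> v \<noteq> c}"
    proof
      fix e assume e: "e \<in> E"
      obtain a b where ab: "a \<noteq> b" "e = {a, b}" "a \<in> V" "b \<in> V" using sg_edge[OF sg e] by blast
      show "e \<in> {{c, v} | v. v \<in> V \<and> v \<noteq> c}"
      proof (cases "a = c")
        case True
        then show ?thesis using ab by blast
      next
        case False
        then have ca: "{c, a} \<in> E" using allS[OF ab(3)] by simp
        have "a \<in> e" using ab(2) by simp
        then have "e = {c, a}" using mp[OF bspec[OF lf[OF ca] e]] by blast
        then show ?thesis using ab(3) False by blast
      qed
    qed
    show "{{c, v} | v. v \<in> V \<and> v \<noteq> c} \<subseteq> E"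
    proof
      fix e assume "e \<in> {{c, v} | v. v \<in> V \<and> v \<noteq> c}"
      then obtain v where v: "e = {c, v}" "v \<in> V" "v \<noteq> c" by blast
      then show "e \<in> E" using allS[OF v(2)] by simp
    qed
  qed
  then show ?thesis unfolding is_star_def using assms(2) by blast
qed

lemma arith_half:
  fixes d s P :: nat
  assumes "d * s = (d - 1) * P" "2 \<le> d"
  shows "P \<le> 2 * s"
proof -
  have "d * P \<le> (2 * (d - 1)) * P" using assms(2) by (intro mult_right_mono) auto
  also have "\<dots> = d * (2 * s)" using assms(1) by (simp add: algebra_simps)
  finally have "d * P \<le> d * (2 * s)" .
  then show ?thesis using assms(2) by simp
qed

lemma arith_eq2:
  fixes d s P :: nat
  assumes "d * s = (d - 1) * P" "2 \<le> d" "2 * s = P" "0 < P"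
  shows "d = 2"
proof -
  have "d * P = d * (2 * s)" using assms(3) by simp
  also have "\<dots> = 2 * (d * s)" by simp
  also have "\<dots> = 2 * ((d - 1) * P)" using assms(1) by simp
  also have "\<dots> = (2 * (d - 1)) * P" by simp
  finally have "d * P = (2 * (d - 1)) * P" .
  then have "d = 2 * (d - 1)" using assms(4) by simp
  then show ?thesis using assms(2) by simp
qed

lemma deg_le2:
  assumes "is_tree V E" "3 \<le> card V" "x0 \<in> V" "xl \<in> V" "x0 \<noteq> xl"
    "\<forall>y\<in>V. degree E y = 1 \<longrightarrow> y = x0 \<or> y = xl"
  shows "\<forall>v\<in>V. degree E v \<le> 2"
proof (rule ccontr)
  assume "\<not> ?thesis"
  then obtain z where z: "z \<in> V" "2 < degree E z" by (auto simp: not_le)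
  have fin: "finite V" using tree_finite[OF assms(1)] .
  have c2: "2 \<le> card V" using assms(2) by simp
  define g where "g v = (if v = x0 \<or> v = xl then 1 else 2::nat)" for v
  have le: "\<forall>v\<in>V. g v \<le> degree E v"
  proof
    fix v assume v: "v \<in> V"
    have d1: "1 \<le> degree E v" using deg_pos[OF assms(1) c2 v] .
    show "g v \<le> degree E v"
    proof (cases "v = x0 \<or> v = xl")
      case True
      then show ?thesis using d1 by (simp add: g_def)
    next
      case False
      then have "degree E v \<noteq> 1" using assms(6) v by blast
      then show ?thesis using d1 False by (simp add: g_def)
    qed
  qed
  have lt: "\<exists>v\<in>V. g v < degree E v" using z by (intro bexI[of _ z]) (auto simp: g_def)
  have "sum g V < (\<Sum>v\<in>V. degree E v)" using sum_strict_mono_ex1[OF fin le lt] .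
  moreover have "(\<Sum>v\<in>V. degree E v) = 2 * (card V - 1)"
    using handshake[OF tree_sg[OF assms(1)]] tree_card_E[OF assms(1)] by simp
  moreover have "sum g V = 2 * (card V - 1)"
  proof -
    have sub: "{x0, xl} \<subseteq> V" using assms(3,4) by simp
    have "sum g V = sum g (V - {x0, xl}) + sum g {x0, xl}" using sum.subset_diff[OF sub fin] .
    moreover have "sum g (V - {x0, xl}) = card (V - {x0, xl}) * 2"
    proof -
      have "sum g (V - {x0, xl}) = sum (\<lambda>v. 2) (V - {x0, xl})"
        by (rule sum.cong) (auto simp: g_def)
      then show ?thesis by simp
    qed
    moreover have "card (V - {x0, xl}) = card V - 2"
      using card_Diff_subset[OF _ sub] assms(5) by simp
    moreover have "sum g {x0, xl} = 2" using assms(5) by (simp add: g_def)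
    ultimately show ?thesis using assms(2) by simp
  qed
  ultimately show False by simp
qed

lemma sum_ge4:
  assumes T: "is_tree V E" "3 \<le> card V" "lp V E xs" "4 \<le> length xs"
  shows "PP V E \<le> (\<Sum>l\<in>LE E. QQ V E l)"
    and "(\<Sum>l\<in>LE E. QQ V E l) = PP V E \<Longrightarrow> is_path_graph V E"
proof -
  define n where "n = length xs"
  define a where "a = xs ! 1"
  define a2 where "a2 = xs ! 2"
  define x0 where "x0 = xs ! 0"
  define b where "b = xs ! (n - 2)"
  define b2 where "b2 = xs ! (n - 3)"
  define xl where "xl = xs ! (n - 1)"
  have n4: "4 \<le> n" using T(4) n_def by simp
  have sg: "simple_graph V E" using tree_sg[OF T(1)] .
  have finE: "finite E" using sg_finite_E[OF sg] .
  have fin: "finite V" using tree_finite[OF T(1)] .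
  have p: "pth V E xs" using T(3) by (simp add: lp_def)
  have dxs: "distinct xs" and sV: "set xs \<subseteq> V" and wxs: "wk E xs" using p by (auto simp: pth_def)
  have we: "\<And>i. Suc i < n \<Longrightarrow> {xs ! i, xs ! Suc i} \<in> E" using wxs n_def unfolding wk_nth by blast
  have neq: "\<And>i j. i < n \<Longrightarrow> j < n \<Longrightarrow> i \<noteq> j \<Longrightarrow> xs ! i \<noteq> xs ! j"
    using dxs n_def by (simp add: nth_eq_iff_index_eq)
  have inV: "\<And>i. i < n \<Longrightarrow> xs ! i \<in> V" using sV n_def by auto
  have rl: "rev xs ! 1 = b" "rev xs ! 2 = b2" using n4 by (simp_all add: rev_nth n_def b_def b2_def numeral_2_eq_2 numeral_3_eq_3)
  have ea0: "{x0, a} \<in> E" using we[of 0] n4 by (simp add: x0_def a_def)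
  have ea2: "{a, a2} \<in> E" using we[of 1] n4 by (simp add: a2_def a_def numeral_2_eq_2)
  have i3: "Suc (n - 3) = n - 2" and i2: "Suc (n - 2) = n - 1" using n4 by arith+
  have eb2: "{b2, b} \<in> E" unfolding b2_def b_def i3[symmetric] by (rule we) (use n4 in arith)
  have ebl: "{b, xl} \<in> E" unfolding b_def xl_def i2[symmetric] by (rule we) (use n4 in arith)
  have d_x0a2: "x0 \<noteq> a2" using neq[of 0 2] n4 by (simp add: x0_def a2_def)
  have d_x0a: "x0 \<noteq> a" using neq[of 0 1] n4 by (simp add: x0_def a_def)
  have d_ab: "a \<noteq> b" using neq[of 1 "n - 2"] n4 by (simp add: a_def b_def)
  have d_b2l: "b2 \<noteq> xl" using neq[of "n - 3" "n - 1"] n4 by (simp add: b2_def xl_def)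
  have d_bl: "b \<noteq> xl" using neq[of "n - 2" "n - 1"] n4 by (simp add: b_def xl_def)
  have d_bb2: "b \<noteq> b2" using neq[of "n - 2" "n - 3"] n4 by (simp add: b_def b2_def)
  have d_x0l: "x0 \<noteq> xl" using neq[of 0 "n - 1"] n4 by (simp add: x0_def xl_def)
  have aV: "a \<in> V" "b \<in> V" "x0 \<in> V" "xl \<in> V" using inV n4 by (simp_all add: a_def b_def x0_def xl_def)
  define A where "A = {e \<in> E. a \<in> e} - {{a, a2}}"
  define B where "B = {e \<in> E. b \<in> e} - {{b, b2}}"
  have HA: "\<And>e. e \<in> A \<Longrightarrow> \<exists>y. y \<noteq> a \<and> e = {a, y} \<and> (\<forall>e'\<in>E. y \<in> e' \<longrightarrow> e' = e)"
  proof -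
    fix e assume "e \<in> A"
    then have "e \<in> E" "xs ! 1 \<in> e" "e \<noteq> {xs ! 1, xs ! 2}" by (auto simp: A_def a_def a2_def)
    from nbr1[OF T(1,3) _ this] T(4) show "\<exists>y. y \<noteq> a \<and> e = {a, y} \<and> (\<forall>e'\<in>E. y \<in> e' \<longrightarrow> e' = e)"
      by (simp add: a_def)
  qed
  have HB: "\<And>e. e \<in> B \<Longrightarrow> \<exists>y. y \<noteq> b \<and> e = {b, y} \<and> (\<forall>e'\<in>E. y \<in> e' \<longrightarrow> e' = e)"
  proof -
    fix e assume "e \<in> B"
    then have h: "e \<in> E" "b \<in> e" "e \<noteq> {b, b2}" by (auto simp: B_def)
    have h2: "rev xs ! 1 \<in> e" unfolding rl by (rule h(2))
    have h3: "e \<noteq> {rev xs ! 1, rev xs ! 2}" unfolding rl by (rule h(3))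
    have L3: "3 \<le> length (rev xs)" using T(4) by simp
    have "\<exists>y. y \<noteq> rev xs ! 1 \<and> e = {rev xs ! 1, y} \<and> (\<forall>e'\<in>E. y \<in> e' \<longrightarrow> e' = e)"
      by (rule nbr1[OF T(1) lp_rev[OF T(3)] L3 h(1) h2 h3])
    then show "\<exists>y. y \<noteq> b \<and> e = {b, y} \<and> (\<forall>e'\<in>E. y \<in> e' \<longrightarrow> e' = e)" unfolding rl .
  qed
  have AE: "A \<subseteq> E" and BE: "B \<subseteq> E" by (auto simp: A_def B_def)
  have SA: "degree E a * (\<Sum>l\<in>A. QQ V E l) = card A * PP V E" and AL: "A \<subseteq> LE E"
    using sum_supp[OF T(1,2) AE HA] by blast+
  have SB: "degree E b * (\<Sum>l\<in>B. QQ V E l) = card B * PP V E" and BL: "B \<subseteq> LE E"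
    using sum_supp[OF T(1,2) BE HB] by blast+
  have finA: "finite A" and finB: "finite B" using finE AE BE finite_subset by blast+
  have cA: "card A = degree E a - 1"
  proof -
    have "{a, a2} \<in> {e \<in> E. a \<in> e}" using ea2 by simp
    then show ?thesis unfolding A_def degree_def by (rule card_Diff_singleton)
  qed
  have cB: "card B = degree E b - 1"
  proof -
    have "{b, b2} \<in> {e \<in> E. b \<in> e}" using eb2 by (simp add: insert_commute)
    then show ?thesis unfolding B_def degree_def by (rule card_Diff_singleton)
  qed
  have a0A: "{a, x0} \<in> A"
  proof -
    have "{a, x0} \<noteq> {a, a2}" using d_x0a2 d_x0a by (simp add: doubleton_eq_iff)
    then show ?thesis using ea0 by (simp add: A_def insert_commute)
  qed
  have blB: "{b, xl} \<in> B"
  proof -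
    have "{b, xl} \<noteq> {b, b2}" using d_b2l d_bl by (simp add: doubleton_eq_iff)
    then show ?thesis using ebl by (simp add: B_def)
  qed
  have da: "2 \<le> degree E a"
  proof -
    have "card A \<noteq> 0" using a0A finA by auto
    then show ?thesis using cA by simp
  qed
  have db: "2 \<le> degree E b"
  proof -
    have "card B \<noteq> 0" using blB finB by auto
    then show ?thesis using cB by simp
  qed
  have hA: "PP V E \<le> 2 * (\<Sum>l\<in>A. QQ V E l)" using arith_half[OF SA[unfolded cA] da] .
  have hB: "PP V E \<le> 2 * (\<Sum>l\<in>B. QQ V E l)" using arith_half[OF SB[unfolded cB] db] .
  have disj: "A \<inter> B = {}"
  proof (rule ccontr)
    assume "A \<inter> B \<noteq> {}"
    then obtain e where e: "e \<in> A" "e \<in> B" by blast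
    obtain y where y: "y \<noteq> a" "e = {a, y}" "\<forall>e'\<in>E. y \<in> e' \<longrightarrow> e' = e" using HA[OF e(1)] by blast
    have "b \<in> e" using e(2) by (simp add: B_def)
    then have "y = b" using y(2) d_ab by simp
    then have y3: "\<forall>e'\<in>E. b \<in> e' \<longrightarrow> e' = e" using y(3) by simp
    have "{b2, b} = e" using mp[OF bspec[OF y3 eb2]] by simp
    moreover have "{b, xl} = e" using mp[OF bspec[OF y3 ebl]] by simp
    ultimately have "{b, b2} = {b, xl}" by (simp add: insert_commute)
    then show False using d_b2l d_bb2 by (simp add: doubleton_eq_iff)
  qed
  have finL: "finite (LE E)" using finE unfolding LE_def by simp
  have ABL: "A \<union> B \<subseteq> LE E" using AL BL by simp
  have sAB: "(\<Sum>l\<in>A \<union> B. QQ V E l) = (\<Sum>l\<in>A. QQ V E l) + (\<Sum>l\<in>B. QQ V E l)"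
    using sum.union_disjoint[OF finA finB disj] .
  have sL: "(\<Sum>l\<in>LE E. QQ V E l) = (\<Sum>l\<in>LE E - (A \<union> B). QQ V E l) + (\<Sum>l\<in>A \<union> B. QQ V E l)"
    using sum.subset_diff[OF ABL finL] .
  show "PP V E \<le> (\<Sum>l\<in>LE E. QQ V E l)" using hA hB sAB sL by linarith
  assume eq: "(\<Sum>l\<in>LE E. QQ V E l) = PP V E"
  have PPpos: "0 < PP V E" using PP_pos[OF fin] .
  have eA: "2 * (\<Sum>l\<in>A. QQ V E l) = PP V E" using hA hB sAB sL eq by linarith
  have eB: "2 * (\<Sum>l\<in>B. QQ V E l) = PP V E" using hA hB sAB sL eq by linarith
  have da2: "degree E a = 2" using arith_eq2[OF SA[unfolded cA] da eA PPpos] .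
  have db2: "degree E b = 2" using arith_eq2[OF SB[unfolded cB] db eB PPpos] .
  have rest0: "(\<Sum>l\<in>LE E - (A \<union> B). QQ V E l) = 0" using hA hB sAB sL eq by linarith
  have LAB: "LE E \<subseteq> A \<union> B"
  proof
    fix l assume l: "l \<in> LE E"
    show "l \<in> A \<union> B"
    proof (rule ccontr)
      assume "l \<notin> A \<union> B"
      then have "l \<in> LE E - (A \<union> B)" using l by simp
      moreover have "finite (LE E - (A \<union> B))" using finL by simp
      ultimately have "QQ V E l = 0" using rest0 sum_eq_0_iff by blast
      moreover have "0 < QQ V E l" unfolding QQ_def using fin by (simp add: PP_pos)
      ultimately show False by simp
    qed
  qed
  have Aone: "A = {{a, x0}}"
  proof -
    have "card A = 1" using cA da2 by simp
    then obtain z where "A = {z}" by (auto simp: card_1_singleton_iff)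
    then show ?thesis using a0A by simp
  qed
  have Bone: "B = {{b, xl}}"
  proof -
    have "card B = 1" using cB db2 by simp
    then obtain z where "B = {z}" by (auto simp: card_1_singleton_iff)
    then show ?thesis using blB by simp
  qed
  have deg1: "\<forall>y\<in>V. degree E y = 1 \<longrightarrow> y = x0 \<or> y = xl"
  proof (intro ballI impI)
    fix y assume y: "y \<in> V" "degree E y = 1"
    then obtain e0 where e0: "{e \<in> E. y \<in> e} = {e0}" unfolding degree_def
      by (auto simp: card_1_singleton_iff)
    then have e0E: "e0 \<in> E" "y \<in> e0" by auto
    have lf: "\<forall>e'\<in>E. y \<in> e' \<longrightarrow> e' = e0" using e0 by blast
    have "e0 \<in> LE E" unfolding LE_def using e0E lf by blast
    then have "e0 \<in> A \<union> B" using LAB by blast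
    then have "e0 \<in> {{a, x0}} \<or> e0 \<in> {{b, xl}}" using Aone Bone by blast
    then have "e0 = {a, x0} \<or> e0 = {b, xl}" by blast
    then show "y = x0 \<or> y = xl"
    proof
      assume "e0 = {a, x0}"
      then have "y = a \<or> y = x0" using e0E(2) by simp
      moreover have "y \<noteq> a" using y(2) da2 by auto
      ultimately show ?thesis by simp
    next
      assume "e0 = {b, xl}"
      then have "y = b \<or> y = xl" using e0E(2) by simp
      moreover have "y \<noteq> b" using y(2) db2 by auto
      ultimately show ?thesis by simp
    qed
  qed
  have "\<forall>v\<in>V. degree E v \<le> 2" using deg_le2[OF T(1,2) aV(3,4) d_x0l deg1] .
  then show "is_path_graph V E" using path_of_deg2[OF T(1,3)] T(4) by simp
qed

lemma sum_ge:
  assumes "is_tree V E" "3 \<le> card V"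
  shows "PP V E \<le> (\<Sum>l\<in>LE E. QQ V E l)"
    and "(\<Sum>l\<in>LE E. QQ V E l) = PP V E \<Longrightarrow> is_path_graph V E \<or> is_star V E"
proof -
  have fin: "finite V" using tree_finite[OF assms(1)] .
  have finE: "finite E" using sg_finite_E[OF tree_sg[OF assms(1)]] .
  have finL: "finite (LE E)" using finE unfolding LE_def by simp
  obtain xs where xs: "lp V E xs" using lp_exists[OF fin] by blast
  have l3: "3 \<le> length xs" using lp_len3[OF assms(1,2) xs] .
  have "PP V E \<le> (\<Sum>l\<in>LE E. QQ V E l) \<and>
    ((\<Sum>l\<in>LE E. QQ V E l) = PP V E \<longrightarrow> is_path_graph V E \<or> is_star V E)"
  proof (cases "length xs = 3")
    case True
    let ?c = "xs ! 1"
    have H: "\<forall>e\<in>E. ?c \<in> e \<longrightarrow> (\<exists>y. y \<noteq> ?c \<and> e = {?c, y} \<and> (\<forall>e'\<in>E. y \<in> e' \<longrightarrow> e' = e))"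
      using star_case[OF assms(1) xs True] .
    have cV: "?c \<in> V" using xs True by (auto simp: lp_def pth_def)
    let ?A = "{e \<in> E. ?c \<in> e}"
    have H': "\<And>e. e \<in> ?A \<Longrightarrow> \<exists>y. y \<noteq> ?c \<and> e = {?c, y} \<and> (\<forall>e'\<in>E. y \<in> e' \<longrightarrow> e' = e)"
      using H by blast
    have AE: "?A \<subseteq> E" by blast
    have S: "degree E ?c * (\<Sum>l\<in>?A. QQ V E l) = card ?A * PP V E" and AL: "?A \<subseteq> LE E"
      using sum_supp[OF assms AE H'] by blast+
    have d1: "1 \<le> degree E ?c" using deg_pos[OF assms(1) _ cV] assms(2) by simp
    have "degree E ?c * (\<Sum>l\<in>?A. QQ V E l) = degree E ?c * PP V E" using S unfolding degree_def by simp
    then have "(\<Sum>l\<in>?A. QQ V E l) = PP V E" using d1 by simp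
    moreover have "(\<Sum>l\<in>?A. QQ V E l) \<le> (\<Sum>l\<in>LE E. QQ V E l)" by (rule sum_mono2[OF finL AL]) simp
    moreover have "is_star V E" using star_from[OF assms(1) cV H] .
    ultimately show ?thesis by simp
  next
    case False
    then have "4 \<le> length xs" using l3 by simp
    then show ?thesis using sum_ge4[OF assms xs] by blast
  qed
  then show "PP V E \<le> (\<Sum>l\<in>LE E. QQ V E l)"
    and "(\<Sum>l\<in>LE E. QQ V E l) = PP V E \<Longrightarrow> is_path_graph V E \<or> is_star V E" by blast+
qed

lemma star_sum:
  assumes "is_tree V E" "3 \<le> card V" "c \<in> V" "E = {{c, v} | v. v \<in> V \<and> v \<noteq> c}"
  shows "(\<Sum>l\<in>LE E. QQ V E l) = PP V E"
    and "\<forall>l\<in>LE E. is_path_graph (V - {lv E l}) (E - {l}) \<or> is_star (V - {lv E l}) (E - {l})"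
proof -
  have finE: "finite E" using sg_finite_E[OF tree_sg[OF assms(1)]] .
  have H: "\<And>e. e \<in> E \<Longrightarrow> \<exists>y. y \<noteq> c \<and> e = {c, y} \<and> y \<in> V \<and> (\<forall>e'\<in>E. y \<in> e' \<longrightarrow> e' = e)"
  proof -
    fix e assume "e \<in> E"
    then obtain y where y: "e = {c, y}" "y \<in> V" "y \<noteq> c" using assms(4) by blast
    have "\<forall>e'\<in>E. y \<in> e' \<longrightarrow> e' = e"
    proof (intro ballI impI)
      fix e' assume "e' \<in> E" "y \<in> e'"
      then obtain u where u: "e' = {c, u}" using assms(4) by blast
      then have "y = u" using \<open>y \<in> e'\<close> y(3) by simp
      then show "e' = e" using u y(1) by simp
    qed
    then show "\<exists>y. y \<noteq> c \<and> e = {c, y} \<and> y \<in> V \<and> (\<forall>e'\<in>E. y \<in> e' \<longrightarrow> e' = e)" using y by blast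
  qed
  have H': "\<And>e. e \<in> E \<Longrightarrow> \<exists>y. y \<noteq> c \<and> e = {c, y} \<and> (\<forall>e'\<in>E. y \<in> e' \<longrightarrow> e' = e)"
    using H by blast
  have S: "degree E c * (\<Sum>l\<in>E. QQ V E l) = card E * PP V E" and EL: "E \<subseteq> LE E"
    using sum_supp[OF assms(1,2) _ H'] by blast+
  have LEE: "LE E = E" using EL unfolding LE_def by blast
  have dc: "degree E c = card E"
  proof -
    have "{e \<in> E. c \<in> e} = E" using assms(4) by blast
    then show ?thesis unfolding degree_def by simp
  qed
  have "card E \<noteq> 0"
  proof -
    obtain t where "t \<in> V" "t \<noteq> c" using card2_other[of V c] assms(2,3) by auto
    then have "{c, t} \<in> E" using assms(4) by blast
    then show ?thesis using finE by auto
  qed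
  then show "(\<Sum>l\<in>LE E. QQ V E l) = PP V E" using S dc LEE by simp
  show "\<forall>l\<in>LE E. is_path_graph (V - {lv E l}) (E - {l}) \<or> is_star (V - {lv E l}) (E - {l})"
  proof
    fix l assume "l \<in> LE E"
    then have lE: "l \<in> E" using LEE by simp
    then obtain y where y: "y \<noteq> c" "l = {c, y}" "y \<in> V" "\<forall>e'\<in>E. y \<in> e' \<longrightarrow> e' = l"
      using H by blast
    have lv: "lv E l = y" using lv_eq[OF assms(1,2) lE _ y(4)] y(2) by simp
    have "E - {l} = {{c, v} | v. v \<in> V - {y} \<and> v \<noteq> c}"
    proof
      show "E - {l} \<subseteq> {{c, v} | v. v \<in> V - {y} \<and> v \<noteq> c}"
      proof
        fix e assume e: "e \<in> E - {l}"
        then obtain v where v: "e = {c, v}" "v \<in> V" "v \<noteq> c" using assms(4) by blast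
        have "v \<noteq> y" using e v(1) y(2) by auto
        then show "e \<in> {{c, v} | v. v \<in> V - {y} \<and> v \<noteq> c}" using v by blast
      qed
      show "{{c, v} | v. v \<in> V - {y} \<and> v \<noteq> c} \<subseteq> E - {l}"
      proof
        fix e assume "e \<in> {{c, v} | v. v \<in> V - {y} \<and> v \<noteq> c}"
        then obtain v where v: "e = {c, v}" "v \<in> V" "v \<noteq> y" "v \<noteq> c" by blast
        have "e \<in> E" using v assms(4) by blast
        moreover have "e \<noteq> l" using v y by (auto simp: doubleton_eq_iff)
        ultimately show "e \<in> E - {l}" by simp
      qed
    qed
    then have "is_star (V - {y}) (E - {l})" unfolding is_star_def using assms(3) y(1) by blast
    then show "is_path_graph (V - {lv E l}) (E - {l}) \<or> is_star (V - {lv E l}) (E - {l})"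
      using lv by simp
  qed
qed

definition pe :: "'a list \<Rightarrow> 'a set set" where
  "pe vs = {{vs ! i, vs ! (i + 1)} | i. i + 1 < length vs}"

lemma dnth: "distinct vs \<Longrightarrow> i < length vs \<Longrightarrow> j < length vs \<Longrightarrow> i \<noteq> j \<Longrightarrow> vs ! i \<noteq> vs ! j"
  by (simp add: nth_eq_iff_index_eq)

lemma pe_iff: "e \<in> pe vs \<longleftrightarrow> (\<exists>i. Suc i < length vs \<and> e = {vs ! i, vs ! Suc i})"
  unfolding pe_def by auto

lemma pe_rev_sub: "pe (rev vs) \<subseteq> pe vs"
proof
  fix e assume "e \<in> pe (rev vs)"
  then obtain i where i: "Suc i < length vs" "e = {rev vs ! i, rev vs ! Suc i}"
    unfolding pe_iff by auto
  define j where "j = length vs - 2 - i"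
  have j: "Suc j < length vs" "rev vs ! i = vs ! Suc j" "rev vs ! Suc i = vs ! j"
    using i(1) by (simp_all add: rev_nth j_def Suc_diff_Suc)
  have "e = {vs ! j, vs ! Suc j}" using i(2) j by (simp add: insert_commute)
  then show "e \<in> pe vs" unfolding pe_iff using j(1) by blast
qed

lemma pe_rev: "pe (rev vs) = pe vs"
  using pe_rev_sub[of vs] pe_rev_sub[of "rev vs"] by simp

lemma pe_endleaf:
  assumes "distinct vs" "2 \<le> length vs" "e \<in> pe vs" "vs ! 0 \<in> e"
  shows "e = {vs ! 0, vs ! 1}"
proof -
  obtain i where i: "Suc i < length vs" "e = {vs ! i, vs ! Suc i}" using assms(3) unfolding pe_iff by auto
  have "vs ! 0 = vs ! i \<or> vs ! 0 = vs ! Suc i" using assms(4) i(2) by simp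
  moreover have "vs ! 0 \<noteq> vs ! Suc i" by (rule dnth[OF assms(1)]) (use i(1) in auto)
  ultimately have "vs ! 0 = vs ! i" by simp
  have "i = 0"
  proof (rule ccontr)
    assume "i \<noteq> 0"
    then have "vs ! 0 \<noteq> vs ! i" by (intro dnth[OF assms(1)]) (use i(1) in auto)
    then show False using \<open>vs ! 0 = vs ! i\<close> by simp
  qed
  then show ?thesis using i(2) by simp
qed

lemma pe_deg1:
  assumes "distinct vs" "3 \<le> length vs"
  shows "degree (pe vs) (vs ! 1) = 2"
proof -
  have "{e \<in> pe vs. vs ! 1 \<in> e} = {{vs ! 0, vs ! 1}, {vs ! 1, vs ! 2}}"
  proof
    show "{e \<in> pe vs. vs ! 1 \<in> e} \<subseteq> {{vs ! 0, vs ! 1}, {vs ! 1, vs ! 2}}"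
    proof
      fix e assume "e \<in> {e \<in> pe vs. vs ! 1 \<in> e}"
      then obtain i where i: "Suc i < length vs" "e = {vs ! i, vs ! Suc i}" "vs ! 1 \<in> e"
        unfolding pe_iff by auto
      then have "vs ! 1 = vs ! i \<or> vs ! 1 = vs ! Suc i" by simp
      then have "i = 1 \<or> i = 0" using assms i(1) by (auto simp: nth_eq_iff_index_eq)
      then show "e \<in> {{vs ! 0, vs ! 1}, {vs ! 1, vs ! 2}}" using i(2) by (auto simp: numeral_2_eq_2)
    qed
    show "{{vs ! 0, vs ! 1}, {vs ! 1, vs ! 2}} \<subseteq> {e \<in> pe vs. vs ! 1 \<in> e}"
    proof -
      have "{vs ! 0, vs ! Suc 0} \<in> pe vs" unfolding pe_iff
        by (rule exI[of _ 0]) (use assms(2) in simp)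
      moreover have "{vs ! 1, vs ! Suc 1} \<in> pe vs" unfolding pe_iff
        by (rule exI[of _ 1]) (use assms(2) in simp)
      ultimately show ?thesis by (simp add: numeral_2_eq_2)
    qed
  qed
  moreover have "{vs ! 0, vs ! 1} \<noteq> {vs ! 1, vs ! 2}"
  proof -
    have "vs ! 0 \<noteq> vs ! 2" "vs ! 0 \<noteq> vs ! 1"
      by (rule dnth[OF assms(1)]; use assms(2) in auto)+
    then show ?thesis by (auto simp: doubleton_eq_iff)
  qed
  ultimately show ?thesis unfolding degree_def by simp
qed

lemma pe_tl:
  assumes "distinct vs" "2 \<le> length vs"
  shows "pe (tl vs) = pe vs - {{vs ! 0, vs ! 1}}"
proof
  show "pe (tl vs) \<subseteq> pe vs - {{vs ! 0, vs ! 1}}"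
  proof
    fix e assume "e \<in> pe (tl vs)"
    then obtain i where i: "Suc i < length (tl vs)" "e = {tl vs ! i, tl vs ! Suc i}"
      unfolding pe_iff by auto
    have e: "e = {vs ! Suc i, vs ! Suc (Suc i)}" using i by (simp add: nth_tl)
    have l: "Suc (Suc i) < length vs" using i(1) by simp
    have "vs ! 0 \<noteq> vs ! Suc i" "vs ! 0 \<noteq> vs ! Suc (Suc i)"
      by (rule dnth[OF assms(1)]; use l in auto)+
    then have "vs ! 0 \<notin> e" using e by simp
    then have "e \<noteq> {vs ! 0, vs ! 1}" by auto
    moreover have "e \<in> pe vs" unfolding pe_iff using e l by blast
    ultimately show "e \<in> pe vs - {{vs ! 0, vs ! 1}}" by simp
  qed
  show "pe vs - {{vs ! 0, vs ! 1}} \<subseteq> pe (tl vs)"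
  proof
    fix e assume e: "e \<in> pe vs - {{vs ! 0, vs ! 1}}"
    then have e1: "e \<in> pe vs" and e2: "e \<noteq> {vs ! 0, vs ! 1}" by simp_all
    from e1 obtain j where j: "Suc j < length vs" "e = {vs ! j, vs ! Suc j}" unfolding pe_iff by blast
    have "j \<noteq> 0" using e2 j(2) by auto
    then obtain i where i: "j = Suc i" by (cases j) auto
    have "e = {tl vs ! i, tl vs ! Suc i}" using j i by (simp add: nth_tl)
    moreover have "Suc i < length (tl vs)" using j i by simp
    ultimately show "e \<in> pe (tl vs)" unfolding pe_iff by blast
  qed
qed

lemma pe_LE:
  assumes "distinct vs" "3 \<le> length vs" "l \<in> LE (pe vs)"
  shows "l = {vs ! 0, vs ! 1} \<or> l = {vs ! (length vs - 2), vs ! (length vs - 1)}"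
proof -
  have lE: "l \<in> pe vs" and "\<exists>w\<in>l. \<forall>e'\<in>pe vs. w \<in> e' \<longrightarrow> e' = l" using assms(3) unfolding LE_def by auto
  then obtain w where w: "w \<in> l" "\<forall>e'\<in>pe vs. w \<in> e' \<longrightarrow> e' = l" by blast
  obtain i where i: "Suc i < length vs" "l = {vs ! i, vs ! Suc i}" using lE unfolding pe_iff by auto
  show ?thesis
  proof (rule ccontr)
    assume nt: "\<not> ?thesis"
    have i0: "i \<noteq> 0"
    proof
      assume "i = 0"
      then have "l = {vs ! 0, vs ! 1}" using i(2) by simp
      then show False using nt by simp
    qed
    have i2: "Suc (Suc i) < length vs"
    proof (rule ccontr)
      assume "\<not> Suc (Suc i) < length vs"
      then have "i = length vs - 2" "Suc i = length vs - 1" using i(1) by arith+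
      then have "l = {vs ! (length vs - 2), vs ! (length vs - 1)}" using i(2) by simp
      then show False using nt by simp
    qed
    from i0 obtain k where k: "i = Suc k" by (cases i) auto
    have "w = vs ! i \<or> w = vs ! Suc i" using w(1) i(2) by simp
    then show False
    proof
      assume wi: "w = vs ! i"
      have "{vs ! k, vs ! i} \<in> pe vs" unfolding pe_iff using i(1) k by (intro exI[of _ k]) simp
      then have "{vs ! k, vs ! i} = l" using w(2) wi by simp
      then have "vs ! k \<in> l" by auto
      moreover have "vs ! k \<noteq> vs ! i" "vs ! k \<noteq> vs ! Suc i"
        by (rule dnth[OF assms(1)]; use i(1) k in auto)+
      ultimately show False using i(2) by simp
    next
      assume wi: "w = vs ! Suc i"
      have "{vs ! Suc i, vs ! Suc (Suc i)} \<in> pe vs" unfolding pe_iff using i2 by auto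
      then have "{vs ! Suc i, vs ! Suc (Suc i)} = l" using w(2) wi by simp
      then have "vs ! Suc (Suc i) \<in> l" by auto
      moreover have "vs ! Suc (Suc i) \<noteq> vs ! i" "vs ! Suc (Suc i) \<noteq> vs ! Suc i"
        by (rule dnth[OF assms(1)]; use i2 in auto)+
      ultimately show False using i(2) by simp
    qed
  qed
qed

lemma path_front:
  assumes "is_tree V E" "3 \<le> card V" "distinct vs" "set vs = V" "E = pe vs"
  shows "{vs ! 0, vs ! 1} \<in> LE E" "lv E {vs ! 0, vs ! 1} = vs ! 0"
    "2 * QQ V E {vs ! 0, vs ! 1} = PP V E"
    "is_path_graph (V - {vs ! 0}) (E - {{vs ! 0, vs ! 1}})"
proof -
  have len: "3 \<le> length vs" using assms(2,3,4) distinct_card by metis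
  have e0: "{vs ! 0, vs ! 1} \<in> E" unfolding assms(5) pe_iff
    by (rule exI[of _ 0]) (use len in simp)
  have lf: "\<forall>e\<in>E. vs ! 0 \<in> e \<longrightarrow> e = {vs ! 0, vs ! 1}"
    using pe_endleaf[OF assms(3)] len assms(5) by simp
  show "{vs ! 0, vs ! 1} \<in> LE E" unfolding LE_def using e0 lf by blast
  show lv: "lv E {vs ! 0, vs ! 1} = vs ! 0" using lv_eq[OF assms(1,2) e0 _ lf] by simp
  have ne: "vs ! 1 \<noteq> vs ! 0" by (rule dnth[OF assms(3)]) (use len in auto)
  have e0': "{vs ! 1, vs ! 0} \<in> E" using e0 by (simp add: insert_commute)
  have lf': "\<forall>e\<in>E. vs ! 0 \<in> e \<longrightarrow> e = {vs ! 1, vs ! 0}" using lf by (simp add: insert_commute)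
  have "PP V E = degree E (vs ! 1) * QQ V E {vs ! 1, vs ! 0}" using supp_Q[OF assms(1,2) e0' ne lf'] .
  moreover have "degree E (vs ! 1) = 2" using pe_deg1[OF assms(3) len] assms(5) by simp
  ultimately show "2 * QQ V E {vs ! 0, vs ! 1} = PP V E" by (simp add: insert_commute)
  have "vs = vs ! 0 # tl vs" using len by (cases vs) auto
  then have st: "set (tl vs) = V - {vs ! 0}" using assms(3,4) by (metis distinct.simps(2) list.simps(15) Diff_insert_absorb)
  have dt: "distinct (tl vs)" using assms(3) by (simp add: distinct_tl)
  have "E - {{vs ! 0, vs ! 1}} = pe (tl vs)" using pe_tl[OF assms(3)] len assms(5) by simp
  then show "is_path_graph (V - {vs ! 0}) (E - {{vs ! 0, vs ! 1}})"
    unfolding is_path_graph_def pe_def using st dt by blast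
qed

lemma path_sum:
  assumes "is_tree V E" "3 \<le> card V" "distinct vs" "set vs = V" "E = pe vs"
  shows "(\<Sum>l\<in>LE E. QQ V E l) = PP V E"
    and "\<forall>l\<in>LE E. is_path_graph (V - {lv E l}) (E - {l}) \<or> is_star (V - {lv E l}) (E - {l})"
proof -
  let ?r = "rev vs"
  have len: "3 \<le> length vs" using assms(2,3,4) distinct_card by metis
  have r: "distinct ?r" "set ?r = V" "E = pe ?r" using assms(3,4,5) pe_rev by auto
  note F1 = path_front[OF assms]
  note F2 = path_front[OF assms(1,2) r]
  let ?e0 = "{vs ! 0, vs ! 1}" and ?e1 = "{?r ! 0, ?r ! 1}"
  have l0: "0 < length vs" "1 < length vs" using len by linarith+
  have r0: "?r ! 0 = vs ! (length vs - 1)" "?r ! 1 = vs ! (length vs - 2)"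
    using rev_nth[OF l0(1)] rev_nth[OF l0(2)] by (simp_all add: numeral_2_eq_2)
  have ne: "?e0 \<noteq> ?e1"
  proof -
    have "vs ! 0 \<noteq> vs ! (length vs - 1)" "vs ! 0 \<noteq> vs ! (length vs - 2)"
      by (rule dnth[OF assms(3)]; use len in auto)+
    then have "vs ! 0 \<notin> ?e1" using r0 by simp
    then show ?thesis by auto
  qed
  have LEE: "LE E = {?e0, ?e1}"
  proof
    show "LE E \<subseteq> {?e0, ?e1}"
    proof
      fix l assume "l \<in> LE E"
      then have "l = ?e0 \<or> l = {vs ! (length vs - 2), vs ! (length vs - 1)}"
        using pe_LE[OF assms(3) len] assms(5) by simp
      then show "l \<in> {?e0, ?e1}" using r0 by (auto simp: insert_commute)
    qed
    show "{?e0, ?e1} \<subseteq> LE E" using F1(1) F2(1) by simp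
  qed
  have "(\<Sum>l\<in>LE E. QQ V E l) = QQ V E ?e0 + QQ V E ?e1" using LEE ne by simp
  then show "(\<Sum>l\<in>LE E. QQ V E l) = PP V E" using F1(3) F2(3) by simp
  show "\<forall>l\<in>LE E. is_path_graph (V - {lv E l}) (E - {l}) \<or> is_star (V - {lv E l}) (E - {l})"
    using LEE F1(2,4) F2(2,4) by auto
qed

lemma F_empty: "F ({} :: 'a set set) = 1"
proof -
  have "Collect (is_shelling ({} :: 'a set set)) = {[]}" by (auto simp: is_shelling_def)
  then show ?thesis unfolding num_shellings_def by simp
qed

lemma main:
  assumes "is_tree V E" "2 \<le> card V"
  shows "PP V E \<le> F E \<and> (F E = PP V E \<longleftrightarrow> is_path_graph V E \<or> is_star V E)"
  using assms
proof (induction "card V" arbitrary: V E rule: less_induct)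
  case less
  have T: "is_tree V E" and c2: "2 \<le> card V" using less.prems by auto
  have sg: "simple_graph V E" using tree_sg[OF T] .
  have fin: "finite V" using tree_finite[OF T] .
  have finE: "finite E" using sg_finite_E[OF sg] .
  obtain a b where ab: "{a, b} \<in> E" using edge_exists[OF T c2] by blast
  have Ene: "E \<noteq> {}" using ab by blast
  have rec: "F E = (\<Sum>l\<in>LE E. F (E - {l}))" using shell_rec[OF T Ene] .
  show ?case
  proof (cases "card V = 2")
    case True
    have abV: "a \<noteq> b" "a \<in> V" "b \<in> V" using sg_pair[OF sg ab] by auto
    have "{a, b} \<subseteq> V" using abV by simp
    moreover have "card {a, b} = card V" using True abV(1) by simp
    ultimately have V2: "V = {a, b}" using card_subset_eq[OF fin] by blast
    have "card E = 1" using tree_card_E[OF T] True by simp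
    then obtain z where "E = {z}" by (auto simp: card_1_singleton_iff)
    then have E1: "E = {{a, b}}" using ab by simp
    have LE1: "LE E = {{a, b}}"
    proof
      show "LE E \<subseteq> {{a, b}}" unfolding LE_def using E1 by blast
      have "\<forall>e'\<in>E. a \<in> e' \<longrightarrow> e' = {a, b}" using E1 by simp
      then show "{{a, b}} \<subseteq> LE E" unfolding LE_def using ab by blast
    qed
    have FE: "F E = 1" using rec LE1 E1 F_empty by simp
    have la: "\<forall>e\<in>E. a \<in> e \<longrightarrow> e = {a, b}" using E1 by simp
    have lb: "\<forall>e\<in>E. b \<in> e \<longrightarrow> e = {a, b}" using E1 by simp
    have bin: "b \<in> {a, b}" by simp
    have da: "degree E a = 1" using deg_leaf[OF ab insertI1 la] .
    have db: "degree E b = 1" using deg_leaf[OF ab bin lb] .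
    have PE: "PP V E = 1" unfolding PP_def V2 using abV(1) da db by simp
    have "is_path_graph V E"
    proof -
      have "{{[a, b] ! i, [a, b] ! (i + 1)} | i. i + 1 < length [a, b]} = {{a, b}}" by auto
      then show ?thesis unfolding is_path_graph_def using V2 E1 abV(1)
        by (intro exI[of _ "[a, b]"]) simp
    qed
    then show ?thesis using FE PE by simp
  next
    case False
    then have c3: "3 \<le> card V" using c2 by simp
    have IH: "QQ V E l \<le> F (E - {l}) \<and>
        (F (E - {l}) = QQ V E l \<longleftrightarrow> is_path_graph (V - {lv E l}) (E - {l}) \<or> is_star (V - {lv E l}) (E - {l}))"
      if l: "l \<in> LE E" for l
    proof -
      obtain v w where vw: "l = {v, w}" "v \<noteq> w" "\<forall>e\<in>E. w \<in> e \<longrightarrow> e = {v, w}" "lv E l = w"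
        using LE_data[OF T c3 l] by blast
      have e: "{v, w} \<in> E" using l vw(1) unfolding LE_def by simp
      have T': "is_tree (V - {w}) (E - {{v, w}})" using leaf_remove[OF T e vw(2,3) c2] .
      have wV: "w \<in> V" using sg_pair[OF sg e] by simp
      have cw: "card (V - {w}) = card V - 1" using wV by (rule card_Diff_singleton)
      have lt: "card (V - {w}) < card V" using cw c3 by simp
      have c2': "2 \<le> card (V - {w})" using cw c3 by simp
      have "PP (V - {w}) (E - {{v, w}}) \<le> F (E - {{v, w}}) \<and>
          (F (E - {{v, w}}) = PP (V - {w}) (E - {{v, w}}) \<longleftrightarrow>
            is_path_graph (V - {w}) (E - {{v, w}}) \<or> is_star (V - {w}) (E - {{v, w}}))"
        using less.hyps[OF lt T' c2'] .
      then show ?thesis unfolding QQ_def vw(4) using vw(1) by simp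
    qed
    have finL: "finite (LE E)" using finE unfolding LE_def by simp
    have s1: "PP V E \<le> (\<Sum>l\<in>LE E. QQ V E l)" using sum_ge(1)[OF T c3] .
    have s2: "(\<Sum>l\<in>LE E. QQ V E l) \<le> F E" unfolding rec by (rule sum_mono) (use IH in blast)
    have ge: "PP V E \<le> F E" using s1 s2 by simp
    have iff: "F E = PP V E \<longleftrightarrow> is_path_graph V E \<or> is_star V E"
    proof
      assume "F E = PP V E"
      then have "(\<Sum>l\<in>LE E. QQ V E l) = PP V E" using s1 s2 by simp
      then show "is_path_graph V E \<or> is_star V E" using sum_ge(2)[OF T c3] by blast
    next
      assume ps: "is_path_graph V E \<or> is_star V E"
      have "(\<Sum>l\<in>LE E. QQ V E l) = PP V E \<and>
          (\<forall>l\<in>LE E. is_path_graph (V - {lv E l}) (E - {l}) \<or> is_star (V - {lv E l}) (E - {l}))"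
        using ps
      proof
        assume "is_path_graph V E"
        then obtain vs where vs: "distinct vs" "set vs = V" "E = pe vs"
          unfolding is_path_graph_def pe_def by blast
        show ?thesis using path_sum[OF T c3 vs] by blast
      next
        assume "is_star V E"
        then obtain c where c: "c \<in> V" "E = {{c, v} | v. v \<in> V \<and> v \<noteq> c}"
          unfolding is_star_def by blast
        show ?thesis using star_sum[OF T c3 c] by blast
      qed
      then have eqs: "(\<Sum>l\<in>LE E. QQ V E l) = PP V E"
        and alls: "\<forall>l\<in>LE E. is_path_graph (V - {lv E l}) (E - {l}) \<or> is_star (V - {lv E l}) (E - {l})"
        by blast+
      have "\<forall>l\<in>LE E. F (E - {l}) = QQ V E l" using IH alls by blast
      then have "F E = (\<Sum>l\<in>LE E. QQ V E l)" unfolding rec by simp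
      then show "F E = PP V E" using eqs by simp
    qed
    show ?thesis using ge iff by blast
  qed
qed

theorem theorem3p8:
  fixes V :: "'a set" and E :: "'a set set"
  assumes "is_tree V E" and "card V \<ge> 2"
  shows "F E \<ge> (\<Prod>v\<in>V. fact (degree E v)) \<and>
    (F E = (\<Prod>v\<in>V. fact (degree E v)) \<longleftrightarrow> is_path_graph V E \<or> is_star V E)"
  using main[OF assms] unfolding PP_def .

end
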